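(* Let $q:\mathbb{C}^n\to\mathbb{C}$ be a holomorphic polynomial that does not vanish on the closed unit ball $\overline{B_n}$. Then there exist an integer $N$ and a holomorphic polynomial mapping $p:\mathbb{C}^n\to\mathbb{C}^N$ such that (1) $p/q$ is a rational proper holomorphic mapping from $B_n$ to $B_N$, and (2) $p/q$ is reduced to lowest terms (no non-constant polynomial divides both $q$ and all components of $p$).
   Context: $B_k$ denotes the open unit ball in $\mathbb{C}^k$. A holomorphic mapping $f:B_n\to B_N$ is proper if $f^{-1}(K)$ is compact in $B_n$ for every compact $K\subset B_N$. *)

theory Defs
  imports "HOL-Analysis.Analysis"
begin

definition cpoly :: "(complex^'n \<Rightarrow> complex) \<Rightarrow> bool" where
  "cpoly f \<longleftrightarrow> (\<exists>(A :: ('n \<Rightarrow> nat) set) c. finite A \<and>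
      (\<forall>z. f z = (\<Sum>\<alpha>\<in>A. c \<alpha> * (\<Prod>i\<in>UNIV. (z $ i) ^ (\<alpha> i)))))"

text \<open>Divisibility in the polynomial ring C[z_1..z_n] (polynomials over C are determined by
their values, so polynomials are identified with their polynomial functions).\<close>

definition cpoly_dvd :: "(complex^'n \<Rightarrow> complex) \<Rightarrow> (complex^'n \<Rightarrow> complex) \<Rightarrow> bool" where
  "cpoly_dvd d f \<longleftrightarrow> (\<exists>g. cpoly g \<and> (\<forall>z. f z = d z * g z))"

definition cpoly_nonconstant :: "(complex^'n \<Rightarrow> complex) \<Rightarrow> bool" where
  "cpoly_nonconstant d \<longleftrightarrow> (\<exists>z w. d z \<noteq> d w)"

definition holomorphic_Cn :: "(complex^'n \<Rightarrow> complex) \<Rightarrow> (complex^'n) set \<Rightarrow> bool" where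
  "holomorphic_Cn f S \<longleftrightarrow> (\<forall>z\<in>S. \<exists>D. (f has_derivative D) (at z) \<and>
      (\<forall>v. D (\<i> *s v) = \<i> * D v))"

text \<open>The unit ball B_N of C^N, with C^N embedded into nat => complex as the vectors whose
coordinates with index >= N vanish (nat => complex carries the product topology, which
induces the Euclidean topology on this copy of C^N).\<close>

definition ballN :: "nat \<Rightarrow> (nat \<Rightarrow> complex) set" where
  "ballN N = {w. (\<forall>i\<ge>N. w i = 0) \<and> (\<Sum>i<N. (cmod (w i))\<^sup>2) < 1}"

definition proper_ball_map :: "nat \<Rightarrow> (complex^'n \<Rightarrow> (nat \<Rightarrow> complex)) \<Rightarrow> bool" where
  "proper_ball_map N F \<longleftrightarrow>
     (\<forall>K. compact K \<and> K \<subseteq> ballN N \<longrightarrow> compact {z \<in> ball 0 1. F z \<in> K})"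

end

theory Submission
  imports Defs "HOL-Complex_Analysis.Complex_Analysis" "HOL-Library.Function_Algebras"
    "HOL-Computational_Algebra.Fundamental_Theorem_Algebra"
begin
definition mnm :: "('n \<Rightarrow> nat) \<Rightarrow> complex^'n \<Rightarrow> complex" where
  "mnm \<alpha> z = (\<Prod>i\<in>UNIV. (z $ i) ^ (\<alpha> i))"

definition mdeg :: "('n::finite \<Rightarrow> nat) \<Rightarrow> nat" where
  "mdeg \<alpha> = (\<Sum>i\<in>UNIV. \<alpha> i)"

definition Adeg :: "nat \<Rightarrow> ('n::finite \<Rightarrow> nat) set" where
  "Adeg D = {\<alpha>. mdeg \<alpha> \<le> D}"

lemma Adeg_sub: "(Adeg D :: ('n::finite \<Rightarrow> nat) set) \<subseteq> PiE UNIV (\<lambda>_. {..D})"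
proof
  fix \<alpha> :: "'n::finite \<Rightarrow> nat" assume "\<alpha> \<in> Adeg D"
  then have "mdeg \<alpha> \<le> D" by (simp add: Adeg_def)
  moreover have "\<alpha> i \<le> mdeg \<alpha>" for i unfolding mdeg_def
    by (rule member_le_sum) auto
  ultimately show "\<alpha> \<in> PiE UNIV (\<lambda>_. {..D})" by (auto intro: order_trans)
qed

lemma finite_Adeg [simp]: "finite (Adeg D)"
  by (rule finite_subset[OF Adeg_sub]) (auto intro: finite_PiE)

lemma finite_Adeg' [simp]: "finite {\<alpha>::'n::finite\<Rightarrow>nat. mdeg \<alpha> \<le> D}"
  using finite_Adeg[of D] by (simp add: Adeg_def)

lemma card_Adeg: "card (Adeg D :: ('n::finite \<Rightarrow> nat) set) \<le> (D+1) ^ CARD('n)"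
proof -
  have "card (Adeg D :: ('n \<Rightarrow> nat) set) \<le> card (PiE (UNIV::'n set) (\<lambda>_. {..D}))"
    by (rule card_mono[OF _ Adeg_sub]) (auto intro: finite_PiE)
  also have "\<dots> = (D+1) ^ CARD('n)" by (simp add: card_PiE)
  finally show ?thesis .
qed

lemma mnm_add: "mnm (\<alpha> + \<beta>) z = mnm \<alpha> z * mnm \<beta> z"
  by (simp add: mnm_def power_add prod.distrib)

lemma mdeg_add: "mdeg (\<alpha> + \<beta>) = mdeg \<alpha> + mdeg \<beta>"
  by (simp add: mdeg_def sum.distrib)

lemma mnm_scale: "mnm \<alpha> (c *s z) = c ^ mdeg \<alpha> * mnm \<alpha> z"
  by (simp add: mnm_def mdeg_def power_mult_distrib prod.distrib power_sum)

definition cpolyD :: "nat \<Rightarrow> (complex^'n::finite \<Rightarrow> complex) \<Rightarrow> bool" where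
  "cpolyD D f \<longleftrightarrow> (\<exists>c. \<forall>z. f z = (\<Sum>\<alpha>\<in>Adeg D. c \<alpha> * mnm \<alpha> z))"

lemma cpolyD_mono: assumes "cpolyD D f" "D \<le> E" shows "cpolyD E f"
proof -
  obtain c where c: "\<forall>z. f z = (\<Sum>\<alpha>\<in>Adeg D. c \<alpha> * mnm \<alpha> z)"
    using assms(1) by (auto simp: cpolyD_def)
  define c' where "c' \<alpha> = (if \<alpha> \<in> Adeg D then c \<alpha> else 0)" for \<alpha>
  have sub: "Adeg D \<subseteq> Adeg E" using assms(2) by (auto simp: Adeg_def)
  have "f z = (\<Sum>\<alpha>\<in>Adeg E. c' \<alpha> * mnm \<alpha> z)" for z
    unfolding c[rule_format]
    by (rule sum.mono_neutral_cong_left[OF _ sub]) (auto simp: c'_def)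
  then show ?thesis by (auto simp: cpolyD_def)
qed

lemma cpolyD_cpoly: "cpolyD D f \<Longrightarrow> cpoly f"
  unfolding cpolyD_def cpoly_def mnm_def by (auto intro!: exI[of _ "Adeg D"])

lemma cpoly_cpolyD: assumes "cpoly f" shows "\<exists>D. cpolyD D f"
proof -
  obtain A c where A: "finite A" "\<forall>z. f z = (\<Sum>\<alpha>\<in>A. c \<alpha> * mnm \<alpha> z)"
    using assms by (auto simp: cpoly_def mnm_def)
  define D where "D = Max (insert 0 (mdeg ` A))"
  have sub: "A \<subseteq> Adeg D" using A(1) by (auto simp: Adeg_def D_def)
  define c' where "c' \<alpha> = (if \<alpha> \<in> A then c \<alpha> else 0)" for \<alpha>
  have "f z = (\<Sum>\<alpha>\<in>Adeg D. c' \<alpha> * mnm \<alpha> z)" for z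
    unfolding A(2)[rule_format]
    by (rule sum.mono_neutral_cong_left[OF _ sub]) (auto simp: c'_def)
  then show ?thesis by (auto simp: cpolyD_def)
qed

lemma cpolyD_const: "cpolyD D (\<lambda>z. a)"
proof -
  have "cpolyD 0 (\<lambda>z. a)"
  proof -
    have A0: "Adeg 0 = {0::'n::finite\<Rightarrow>nat}" by (auto simp: Adeg_def mdeg_def)
    show ?thesis unfolding cpolyD_def A0 by (auto simp: mnm_def intro!: exI[of _ "\<lambda>_. a"])
  qed
  then show ?thesis by (rule cpolyD_mono) simp
qed

lemma cpolyD_add: assumes "cpolyD D f" "cpolyD D g" shows "cpolyD D (\<lambda>z. f z + g z)"
proof -
  obtain c d where "\<forall>z. f z = (\<Sum>\<alpha>\<in>Adeg D. c \<alpha> * mnm \<alpha> z)" "\<forall>z. g z = (\<Sum>\<alpha>\<in>Adeg D. d \<alpha> * mnm \<alpha> z)"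
    using assms by (auto simp: cpolyD_def)
  then show ?thesis unfolding cpolyD_def
    by (intro exI[of _ "\<lambda>\<alpha>. c \<alpha> + d \<alpha>"]) (simp add: sum.distrib algebra_simps)
qed

lemma cpolyD_cmult: assumes "cpolyD D f" shows "cpolyD D (\<lambda>z. a * f z)"
proof -
  obtain c where "\<forall>z. f z = (\<Sum>\<alpha>\<in>Adeg D. c \<alpha> * mnm \<alpha> z)"
    using assms by (auto simp: cpolyD_def)
  then show ?thesis unfolding cpolyD_def
    by (intro exI[of _ "\<lambda>\<alpha>. a * c \<alpha>"]) (simp add: sum_distrib_left algebra_simps)
qed

lemma cpolyD_neg: assumes "cpolyD D f" shows "cpolyD D (\<lambda>z. - f z)"
  using cpolyD_cmult[OF assms, of "-1"] by simp

lemma cpolyD_diff: assumes "cpolyD D f" "cpolyD D g" shows "cpolyD D (\<lambda>z. f z - g z)"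
  using cpolyD_add[OF assms(1) cpolyD_neg[OF assms(2)]] by simp

lemma cpolyD_sum: assumes "finite I" "\<And>i. i \<in> I \<Longrightarrow> cpolyD D (f i)"
  shows "cpolyD D (\<lambda>z. \<Sum>i\<in>I. f i z)"
  using assms by (induction I rule: finite_induct) (auto intro: cpolyD_add cpolyD_const)

lemma cpolyD_mult: assumes "cpolyD D f" "cpolyD E g" shows "cpolyD (D+E) (\<lambda>z. f z * g z)"
proof -
  obtain c d where c: "\<forall>z. f z = (\<Sum>\<alpha>\<in>Adeg D. c \<alpha> * mnm \<alpha> z)" and d: "\<forall>z. g z = (\<Sum>\<alpha>\<in>Adeg E. d \<alpha> * mnm \<alpha> z)"
    using assms by (auto simp: cpolyD_def)
  let ?S = "Adeg D \<times> Adeg E"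
  define e where "e \<gamma> = (\<Sum>p\<in>{p. p \<in> ?S \<and> fst p + snd p = \<gamma>}. c (fst p) * d (snd p))" for \<gamma>
  have img: "(\<lambda>p. fst p + snd p) ` ?S \<subseteq> Adeg (D+E)"
    by (auto simp: Adeg_def mdeg_add)
  have "f z * g z = (\<Sum>\<gamma>\<in>Adeg (D+E). e \<gamma> * mnm \<gamma> z)" for z
  proof -
    have "f z * g z = (\<Sum>p\<in>?S. c (fst p) * d (snd p) * mnm (fst p + snd p) z)"
      unfolding c[rule_format] d[rule_format] sum_product sum.cartesian_product
      by (intro sum.cong) (auto simp: mnm_add)
    also have "\<dots> = (\<Sum>\<gamma>\<in>Adeg (D+E). \<Sum>p\<in>{p. p \<in> ?S \<and> fst p + snd p = \<gamma>}. c (fst p) * d (snd p) * mnm (fst p + snd p) z)"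
      by (rule sum.group[symmetric]) (use img in auto)
    also have "\<dots> = (\<Sum>\<gamma>\<in>Adeg (D+E). e \<gamma> * mnm \<gamma> z)"
      unfolding e_def sum_distrib_right by (intro sum.cong refl) auto
    finally show ?thesis .
  qed
  then show ?thesis by (auto simp: cpolyD_def)
qed

lemma cpolyD_coord: fixes i :: "'n::finite" shows "cpolyD 1 (\<lambda>z::complex^'n. z $ i)"
proof -
  define \<alpha> where "\<alpha> = (\<lambda>j. if j = i then 1 else 0::nat)"
  have a: "\<alpha> \<in> Adeg 1" by (auto simp: Adeg_def mdeg_def \<alpha>_def)
  have m: "mnm \<alpha> z = z $ i" for z
    by (simp add: mnm_def \<alpha>_def if_distrib prod.If_cases)
  show ?thesis unfolding cpolyD_def
  proof (intro exI[of _ "\<lambda>\<beta>. if \<beta> = \<alpha> then 1 else 0"] allI)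
    fix z :: "complex^'n"
    have "(\<Sum>\<beta>\<in>Adeg 1. (if \<beta> = \<alpha> then 1 else 0) * mnm \<beta> z) = (\<Sum>\<beta>\<in>Adeg 1. if \<beta> = \<alpha> then mnm \<beta> z else 0)"
      by (intro sum.cong) auto
    also have "\<dots> = z $ i" using a by (simp add: m)
    finally show "z $ i = (\<Sum>\<beta>\<in>Adeg 1. (if \<beta> = \<alpha> then 1 else 0) * mnm \<beta> z)" by simp
  qed
qed

definition cdiff :: "(complex^'n::finite \<Rightarrow> complex) \<Rightarrow> complex^'n \<Rightarrow> bool" where
  "cdiff f z \<longleftrightarrow> (\<exists>D. (f has_derivative D) (at z) \<and> (\<forall>v. D (\<i> *s v) = \<i> * D v))"

lemma cdiff_const: "cdiff (\<lambda>z. a) z"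
  unfolding cdiff_def by (intro exI[of _ "\<lambda>v. 0"]) auto

lemma cdiff_coord: "cdiff (\<lambda>z. z $ i) z"
  unfolding cdiff_def
  by (intro exI[of _ "\<lambda>v. v $ i"]) (auto intro: bounded_linear_imp_has_derivative)

lemma cdiff_add: "cdiff f z \<Longrightarrow> cdiff g z \<Longrightarrow> cdiff (\<lambda>z. f z + g z) z"
proof -
  assume "cdiff f z" "cdiff g z"
  then obtain Df Dg where f: "(f has_derivative Df) (at z)" "\<forall>v. Df (\<i> *s v) = \<i> * Df v"
    and g: "(g has_derivative Dg) (at z)" "\<forall>v. Dg (\<i> *s v) = \<i> * Dg v"
    by (auto simp: cdiff_def)
  show ?thesis unfolding cdiff_def
    by (intro exI[of _ "\<lambda>v. Df v + Dg v"] conjI has_derivative_add f g)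
       (simp add: f g algebra_simps)
qed

lemma cdiff_mult: "cdiff f z \<Longrightarrow> cdiff g z \<Longrightarrow> cdiff (\<lambda>z. f z * g z) z"
proof -
  assume "cdiff f z" "cdiff g z"
  then obtain Df Dg where f: "(f has_derivative Df) (at z)" "\<forall>v. Df (\<i> *s v) = \<i> * Df v"
    and g: "(g has_derivative Dg) (at z)" "\<forall>v. Dg (\<i> *s v) = \<i> * Dg v"
    by (auto simp: cdiff_def)
  show ?thesis unfolding cdiff_def
    by (intro exI[of _ "\<lambda>v. f z * Dg v + Df v * g z"] conjI has_derivative_mult f g)
       (simp add: f g algebra_simps)
qed

lemma cdiff_inverse: "cdiff f z \<Longrightarrow> f z \<noteq> 0 \<Longrightarrow> cdiff (\<lambda>z. inverse (f z)) z"
proof -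
  assume "cdiff f z" "f z \<noteq> 0"
  then obtain Df where f: "(f has_derivative Df) (at z)" "\<forall>v. Df (\<i> *s v) = \<i> * Df v"
    by (auto simp: cdiff_def)
  show ?thesis unfolding cdiff_def
    by (intro exI[of _ "\<lambda>h. - (inverse (f z) * Df h * inverse (f z))"] conjI Deriv.has_derivative_inverse[OF \<open>f z \<noteq> 0\<close> f(1)])
       (simp add: f algebra_simps)
qed

lemma cdiff_sum: "finite I \<Longrightarrow> (\<And>i. i \<in> I \<Longrightarrow> cdiff (f i) z) \<Longrightarrow> cdiff (\<lambda>z. \<Sum>i\<in>I. f i z) z"
  by (induction I rule: finite_induct) (auto intro: cdiff_add cdiff_const)

lemma cdiff_prod: "finite I \<Longrightarrow> (\<And>i. i \<in> I \<Longrightarrow> cdiff (f i) z) \<Longrightarrow> cdiff (\<lambda>z. \<Prod>i\<in>I. f i z) z"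
  by (induction I rule: finite_induct) (auto intro: cdiff_mult cdiff_const)

lemma cdiff_power: "cdiff f z \<Longrightarrow> cdiff (\<lambda>z. f z ^ k) z"
  by (induction k) (auto intro: cdiff_mult cdiff_const)

lemma cdiff_cpoly: assumes "cpoly f" shows "cdiff f z"
proof -
  obtain A c where A: "finite A" "\<forall>z. f z = (\<Sum>\<alpha>\<in>A. c \<alpha> * (\<Prod>i\<in>UNIV. (z $ i) ^ (\<alpha> i)))"
    using assms by (auto simp: cpoly_def)
  have "f = (\<lambda>z. \<Sum>\<alpha>\<in>A. c \<alpha> * (\<Prod>i\<in>UNIV. (z $ i) ^ (\<alpha> i)))" using A(2) by auto
  moreover have "cdiff (\<lambda>z. \<Sum>\<alpha>\<in>A. c \<alpha> * (\<Prod>i\<in>UNIV. (z $ i) ^ (\<alpha> i))) z"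
    by (intro cdiff_sum A(1) cdiff_mult cdiff_const cdiff_prod cdiff_power cdiff_coord) auto
  ultimately show ?thesis by simp
qed

lemma holomorphic_Cn_div:
  assumes "cpoly f" "cpoly g" "\<forall>z\<in>S. g z \<noteq> 0"
  shows "holomorphic_Cn (\<lambda>z. f z / g z) S"
proof -
  have "cdiff (\<lambda>z. f z * inverse (g z)) z" if "z \<in> S" for z
    using that assms by (intro cdiff_mult cdiff_inverse cdiff_cpoly) auto
  then show ?thesis unfolding holomorphic_Cn_def cdiff_def by (simp add: divide_inverse)
qed

lemma cpoly_line: assumes "cpoly f"
  shows "\<exists>p::complex poly. \<forall>t. f (a + t *s b) = poly p t"
proof -
  obtain A c where A: "finite A" "\<forall>z. f z = (\<Sum>\<alpha>\<in>A. c \<alpha> * (\<Prod>i\<in>UNIV. (z $ i) ^ (\<alpha> i)))"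
    using assms by (auto simp: cpoly_def)
  define p where "p = (\<Sum>\<alpha>\<in>A. smult (c \<alpha>) (\<Prod>i\<in>UNIV. [:a $ i, b $ i:] ^ (\<alpha> i)))"
  have "f (a + t *s b) = poly p t" for t
    unfolding A(2)[rule_format] p_def poly_sum
    by (simp add: poly_prod mult.commute)
  then show ?thesis by blast
qed

lemma cpoly_nonconst_zero:
  assumes "cpoly d" "cpoly_nonconstant d"
  shows "\<exists>z. d z = 0"
proof -
  obtain z w where zw: "d z \<noteq> d w" using assms(2) by (auto simp: cpoly_nonconstant_def)
  obtain p where p: "\<forall>t. d (z + t *s (w - z)) = poly p t"
    using cpoly_line[OF assms(1)] by blast
  have "poly p 0 = d z" using p[rule_format, of 0] by simp
  moreover have "poly p 1 = d w" using p[rule_format, of 1] by simp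
  ultimately have "\<not> constant (poly p)" using zw unfolding constant_def by metis
  then obtain t where "poly p t = 0" using fundamental_theorem_of_algebra by blast
  then show ?thesis using p by metis
qed

lemma main_reduction:
  fixes q :: "complex^'n::finite \<Rightarrow> complex" and h :: "nat \<Rightarrow> complex^'n \<Rightarrow> complex"
  assumes q: "cpoly q" "\<forall>z\<in>cball 0 1. q z \<noteq> 0"
    and h: "\<forall>i<N. cpoly (h i)" and i0: "i0 < N" "\<forall>z. h i0 z = c" "c \<noteq> 0"
    and inside: "\<forall>z. norm z < 1 \<longrightarrow> (\<Sum>i<N. (cmod (h i z))\<^sup>2) < (cmod (q z))\<^sup>2"
    and bdry: "\<forall>z. norm z = 1 \<longrightarrow> (\<Sum>i<N. (cmod (h i z))\<^sup>2) = (cmod (q z))\<^sup>2"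
  shows "\<exists>(N::nat) (p :: nat \<Rightarrow> complex^'n \<Rightarrow> complex).
           (\<forall>i<N. cpoly (p i))
         \<and> (\<forall>i<N. holomorphic_Cn (\<lambda>z. p i z / q z) (ball 0 1))
         \<and> (\<forall>z\<in>ball 0 1. (\<lambda>i. if i < N then p i z / q z else 0) \<in> ballN N)
         \<and> proper_ball_map N (\<lambda>z i. if i < N then p i z / q z else 0)
         \<and> (\<forall>d. cpoly d \<and> cpoly_nonconstant d \<and> cpoly_dvd d q \<and> (\<forall>i<N. cpoly_dvd d (p i))
                \<longrightarrow> False)"
proof (intro exI[of _ N] exI[of _ h] conjI allI impI ballI)
  let ?F = "\<lambda>z i. if i < N then h i z / q z else 0"
  show "cpoly (h i)" if "i < N" for i using h that by auto
  show "holomorphic_Cn (\<lambda>z. h i z / q z) (ball 0 1)" if "i < N" for i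
    using h that q by (intro holomorphic_Cn_div) auto
  have sumF: "(\<Sum>i<N. (cmod (?F z i))\<^sup>2) = (\<Sum>i<N. (cmod (h i z))\<^sup>2) / (cmod (q z))\<^sup>2" for z
    by (simp add: sum_divide_distrib norm_divide power_divide)
  show inb: "?F z \<in> ballN N" if "z \<in> ball 0 1" for z
  proof -
    have "norm z < 1" using that by auto
    then have "q z \<noteq> 0" using q by auto
    then have "(\<Sum>i<N. (cmod (?F z i))\<^sup>2) < 1"
      unfolding sumF using inside \<open>norm z < 1\<close> by (simp add: divide_less_eq)
    then show ?thesis unfolding ballN_def by auto
  qed
  show "proper_ball_map N ?F" unfolding proper_ball_map_def
  proof (intro allI impI)
    fix K assume K: "compact K \<and> K \<subseteq> ballN N"
    have eq: "{z \<in> ball 0 1. ?F z \<in> K} = cball 0 1 \<inter> ?F -` K"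
    proof -
      have "?F z \<notin> ballN N" if "norm z = 1" for z
      proof -
        have "q z \<noteq> 0" using q that by auto
        then have "(\<Sum>i<N. (cmod (?F z i))\<^sup>2) = 1"
          unfolding sumF using bdry that by simp
        then show ?thesis unfolding ballN_def by auto
      qed
      then show ?thesis using K
      proof (intro set_eqI iffI)
        fix z assume "z \<in> cball 0 1 \<inter> ?F -` K"
        then have "norm z \<le> 1" "?F z \<in> K" by auto
        then have "norm z \<noteq> 1" using K \<open>\<And>z. norm z = 1 \<Longrightarrow> ?F z \<notin> ballN N\<close> by blast
        then show "z \<in> {z \<in> ball 0 1. ?F z \<in> K}" using \<open>norm z \<le> 1\<close> \<open>?F z \<in> K\<close> by auto
      qed auto
    qed
    have cont: "continuous_on (cball 0 1) ?F"
    proof (intro continuous_on_coordinatewise_then_product)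
      fix i
      show "continuous_on (cball 0 1) (\<lambda>z. ?F z i)"
      proof (cases "i < N")
        case True
        have "cdiff (\<lambda>z. h i z * inverse (q z)) z" if "z \<in> cball 0 1" for z
          using that q h True by (intro cdiff_mult cdiff_inverse cdiff_cpoly) auto
        then have "continuous (at z) (\<lambda>z. h i z / q z)" if "z \<in> cball 0 1" for z
          using that unfolding cdiff_def by (auto simp: divide_inverse dest: has_derivative_continuous)
        then show ?thesis using True by (auto intro!: continuous_at_imp_continuous_on)
      qed auto
    qed
    have "closed K" using K by (auto intro: compact_imp_closed)
    then have "closed (cball 0 1 \<inter> ?F -` K)"
      by (intro continuous_closed_preimage cont) auto
    then have "compact ((cball 0 1 \<inter> ?F -` K) \<inter> cball 0 1)"
      by (rule closed_Int_compact) (rule compact_cball)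
    moreover have "(cball 0 1 \<inter> ?F -` K) \<inter> cball 0 1 = cball 0 1 \<inter> ?F -` K" by blast
    ultimately show "compact {z \<in> ball 0 1. ?F z \<in> K}" unfolding eq by simp
  qed
  fix d assume d: "cpoly d \<and> cpoly_nonconstant d \<and> cpoly_dvd d q \<and> (\<forall>i<N. cpoly_dvd d (h i))"
  then have "cpoly_dvd d (h i0)" using i0 by blast
  then obtain g where "\<forall>z. h i0 z = d z * g z" unfolding cpoly_dvd_def by blast
  then have "d z \<noteq> 0" for z using i0 by (metis mult_zero_left)
  moreover obtain z where "d z = 0" using cpoly_nonconst_zero d by blast
  ultimately show False by blast
qed

lemma lagrange_cmod:
  fixes x y :: "'i \<Rightarrow> complex"
  assumes "finite I"
  shows "(\<Sum>i\<in>I. (cmod (x i))\<^sup>2) * (\<Sum>i\<in>I. (cmod (y i))\<^sup>2) =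
         (cmod (\<Sum>i\<in>I. x i * y i))\<^sup>2 + (1/2) * (\<Sum>i\<in>I. \<Sum>j\<in>I. (cmod (cnj (x i) * y j - cnj (x j) * y i))\<^sup>2)"
proof -
  have *: "complex_of_real ((cmod u)\<^sup>2) = u * cnj u" for u by (rule complex_norm_square)
  define X where "X = (\<Sum>i\<in>I. x i * cnj (x i))"
  define Y where "Y = (\<Sum>i\<in>I. y i * cnj (y i))"
  define P where "P = (\<Sum>i\<in>I. x i * y i)"
  have cP: "cnj P = (\<Sum>i\<in>I. cnj (x i) * cnj (y i))" by (simp add: P_def)
  have trm: "(cnj (x i) * y j - cnj (x j) * y i) * cnj (cnj (x i) * y j - cnj (x j) * y i)
     = ((x i * cnj (x i)) * (y j * cnj (y j)) + (x j * cnj (x j)) * (y i * cnj (y i)))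
          - ((cnj (x i) * cnj (y i)) * (x j * y j) + (x i * y i) * (cnj (x j) * cnj (y j)))" for i j
    by (simp add: algebra_simps)
  have T1: "(\<Sum>i\<in>I. \<Sum>j\<in>I. (x i * cnj (x i)) * (y j * cnj (y j))) = X * Y"
    by (simp add: X_def Y_def sum_product)
  have T2: "(\<Sum>i\<in>I. \<Sum>j\<in>I. (x j * cnj (x j)) * (y i * cnj (y i))) = X * Y"
    unfolding X_def Y_def sum_product by (rule sum.swap)
  have T3: "(\<Sum>i\<in>I. \<Sum>j\<in>I. (cnj (x i) * cnj (y i)) * (x j * y j)) = P * cnj P"
    unfolding cP P_def sum_product by (subst sum.swap) (simp add: mult.commute flip: sum_product)
  have T4: "(\<Sum>i\<in>I. \<Sum>j\<in>I. (x i * y i) * (cnj (x j) * cnj (y j))) = P * cnj P"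
    by (simp add: cP P_def sum_product)
  have eq: "(\<Sum>i\<in>I. \<Sum>j\<in>I. (cnj (x i) * y j - cnj (x j) * y i) * cnj (cnj (x i) * y j - cnj (x j) * y i))
      = 2 * (X * Y) - 2 * (P * cnj P)"
    unfolding trm sum_subtractf sum.distrib T1 T2 T3 T4 by simp
  have "complex_of_real ((\<Sum>i\<in>I. (cmod (x i))\<^sup>2) * (\<Sum>i\<in>I. (cmod (y i))\<^sup>2))
     = complex_of_real ((cmod P)\<^sup>2 + (1/2) * (\<Sum>i\<in>I. \<Sum>j\<in>I. (cmod (cnj (x i) * y j - cnj (x j) * y i))\<^sup>2))"
    unfolding of_real_mult of_real_add of_real_sum * eq
    by (simp add: X_def[symmetric] Y_def[symmetric] field_simps)
  then show ?thesis unfolding P_def of_real_eq_iff .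
qed

definition mcoef :: "('n::finite \<Rightarrow> nat) \<Rightarrow> real" where
  "mcoef \<alpha> = fact (mdeg \<alpha>) / (\<Prod>i\<in>UNIV. fact (\<alpha> i))"

lemma mcoef_pos: "mcoef \<alpha> > 0"
  by (simp add: mcoef_def prod_pos)

definition unitv :: "'n \<Rightarrow> 'n \<Rightarrow> nat" where "unitv i = (\<lambda>j. if j = i then 1 else 0)"

lemma mdeg_unitv [simp]: "mdeg (unitv i :: 'n::finite \<Rightarrow> nat) = 1"
  by (simp add: mdeg_def unitv_def)

lemma finite_Sdeg [simp]: "finite {\<alpha>::'n::finite\<Rightarrow>nat. mdeg \<alpha> = m}"
  using finite_Adeg[of m] by (rule rev_finite_subset) (auto simp: Adeg_def)

lemma multinomial:
  fixes x :: "'n::finite \<Rightarrow> real"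
  shows "(\<Sum>i\<in>UNIV. x i) ^ m = (\<Sum>\<alpha>\<in>{\<alpha>. mdeg \<alpha> = m}. mcoef \<alpha> * (\<Prod>i\<in>UNIV. x i ^ \<alpha> i))"
proof (induction m)
  case 0
  have "{\<alpha>::'n\<Rightarrow>nat. mdeg \<alpha> = 0} = {0}" by (auto simp: mdeg_def)
  then show ?case by (simp add: mcoef_def mdeg_def)
next
  case (Suc m)
  let ?S = "{\<alpha>::'n\<Rightarrow>nat. mdeg \<alpha> = m}" and ?T = "{\<alpha>::'n\<Rightarrow>nat. mdeg \<alpha> = Suc m}"
  let ?xp = "\<lambda>\<alpha>. \<Prod>i\<in>UNIV. x i ^ \<alpha> i"
  have xu: "(\<Prod>j\<in>UNIV. x j ^ unitv i j) = x i" for i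
  proof -
    have "(\<Prod>j\<in>UNIV. x j ^ unitv i j) = (\<Prod>j\<in>UNIV. if j = i then x j else 1)"
      by (intro prod.cong) (auto simp: unitv_def)
    then show ?thesis by simp
  qed
  have xp_add: "(\<Prod>j\<in>UNIV. x j ^ (\<alpha> j + unitv i j)) = ?xp \<alpha> * x i" for \<alpha> i
    by (simp add: power_add prod.distrib xu)
  have "(\<Sum>i\<in>UNIV. x i) ^ Suc m = (\<Sum>\<alpha>\<in>?S. \<Sum>i\<in>UNIV. mcoef \<alpha> * ?xp (\<alpha> + unitv i))"
    by (simp add: Suc.IH xp_add sum_distrib_left sum_distrib_right mult_ac)
  also have "\<dots> = (\<Sum>p\<in>?S \<times> UNIV. mcoef (fst p) * ?xp (fst p + unitv (snd p)))"
    by (simp add: sum.cartesian_product split_def)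
  also have "\<dots> = (\<Sum>\<beta>\<in>?T. \<Sum>p\<in>{p. p \<in> ?S \<times> UNIV \<and> fst p + unitv (snd p) = \<beta>}. mcoef (fst p) * ?xp (fst p + unitv (snd p)))"
    by (rule sum.group[symmetric]) (auto simp: mdeg_add)
  also have "\<dots> = (\<Sum>\<beta>\<in>?T. mcoef \<beta> * ?xp \<beta>)"
  proof (intro sum.cong refl)
    fix \<beta> :: "'n \<Rightarrow> nat" assume "\<beta> \<in> ?T"
    then have dB: "mdeg \<beta> = Suc m" by simp
    have "(\<Sum>p\<in>{p. p \<in> ?S \<times> UNIV \<and> fst p + unitv (snd p) = \<beta>}. mcoef (fst p) * ?xp (fst p + unitv (snd p)))
        = (\<Sum>i\<in>{i. \<beta> i \<ge> 1}. mcoef (\<beta> - unitv i) * ?xp \<beta>)"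
    proof (rule sum.reindex_bij_witness[of _ "\<lambda>i. (\<beta> - unitv i, i)" snd])
      fix p assume p: "p \<in> {p. p \<in> ?S \<times> UNIV \<and> fst p + unitv (snd p) = \<beta>}"
      from p have bp: "\<beta> = fst p + unitv (snd p)" by auto
      have fp: "fst p + unitv (snd p) - unitv (snd p) = fst p" by (auto simp: fun_eq_iff unitv_def)
      then show "(\<beta> - unitv (snd p), snd p) = p" using bp by simp
      from p show "snd p \<in> {i. \<beta> i \<ge> 1}" by (auto simp: unitv_def)
      from fp show "mcoef (\<beta> - unitv (snd p)) * ?xp \<beta> = mcoef (fst p) * ?xp (fst p + unitv (snd p))"
        using bp by simp
    next
      fix i assume i: "i \<in> {i. \<beta> i \<ge> 1}"
      then have e: "\<beta> - unitv i + unitv i = \<beta>" by (auto simp: fun_eq_iff unitv_def)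
      then have "mdeg (\<beta> - unitv i) + 1 = Suc m" using dB by (metis mdeg_add mdeg_unitv)
      then show "(\<beta> - unitv i, i) \<in> {p. p \<in> ?S \<times> UNIV \<and> fst p + unitv (snd p) = \<beta>}"
        using e by auto
      show "snd (\<beta> - unitv i, i) = i" by simp
    qed
    also have "\<dots> = (\<Sum>i\<in>{i. \<beta> i \<ge> 1}. mcoef (\<beta> - unitv i)) * ?xp \<beta>"
      by (simp add: sum_distrib_right)
    also have "(\<Sum>i\<in>{i. \<beta> i \<ge> 1}. mcoef (\<beta> - unitv i)) = mcoef \<beta>"
    proof -
      have "mcoef (\<beta> - unitv i) = real (\<beta> i) * fact m / (\<Prod>j\<in>UNIV. fact (\<beta> j))" if "\<beta> i \<ge> 1" for i
      proof -
        have e: "\<beta> - unitv i + unitv i = \<beta>" using that by (auto simp: fun_eq_iff unitv_def)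
        then have "mdeg (\<beta> - unitv i) + 1 = Suc m" using dB by (metis mdeg_add mdeg_unitv)
        then have md: "mdeg (\<beta> - unitv i) = m" by simp
        have "(\<Prod>j\<in>UNIV. fact (\<beta> j)::real) = (\<Prod>j\<in>UNIV. (if j = i then real (\<beta> i) else 1) * fact ((\<beta> - unitv i) j))"
        proof (intro prod.cong refl)
          fix j show "(fact (\<beta> j)::real) = (if j = i then real (\<beta> i) else 1) * fact ((\<beta> - unitv i) j)"
            using that by (cases "j = i") (auto simp: unitv_def fact_reduce)
        qed
        also have "\<dots> = real (\<beta> i) * (\<Prod>j\<in>UNIV. fact ((\<beta> - unitv i) j))"
          by (simp add: prod.distrib prod.If_cases)
        finally have "(\<Prod>j\<in>UNIV. fact (\<beta> j)::real) = real (\<beta> i) * (\<Prod>j\<in>UNIV. fact ((\<beta> - unitv i) j))" .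
        moreover have "real (\<beta> i) > 0" using that by simp
        ultimately show ?thesis unfolding mcoef_def md by (simp add: field_simps)
      qed
      then have "(\<Sum>i\<in>{i. \<beta> i \<ge> 1}. mcoef (\<beta> - unitv i)) = (\<Sum>i\<in>{i. \<beta> i \<ge> 1}. real (\<beta> i)) * fact m / (\<Prod>j\<in>UNIV. fact (\<beta> j))"
        by (simp add: sum_distrib_right sum_divide_distrib)
      also have "(\<Sum>i\<in>{i. \<beta> i \<ge> 1}. real (\<beta> i)) = real (mdeg \<beta>)"
        unfolding mdeg_def of_nat_sum by (rule sum.mono_neutral_left) auto
      finally show ?thesis unfolding mcoef_def dB by (simp add: field_simps)
    qed
    finally show "(\<Sum>p\<in>{p. p \<in> ?S \<times> UNIV \<and> fst p + unitv (snd p) = \<beta>}. mcoef (fst p) * ?xp (fst p + unitv (snd p))) = mcoef \<beta> * ?xp \<beta>" .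
  qed
  finally show ?case .
qed

lemma norm_sq_vec: "(norm (z::complex^'n::finite))\<^sup>2 = (\<Sum>i\<in>UNIV. (cmod (z $ i))\<^sup>2)"
  unfolding norm_vec_def L2_set_def by (simp add: sum_nonneg)

definition Phi :: "nat \<Rightarrow> complex^'n::finite \<Rightarrow> real" where
  "Phi D z = (\<Sum>m\<le>D. (norm z)^(2*m))"

definition Acoef :: "nat \<Rightarrow> (('n::finite \<Rightarrow> nat) \<Rightarrow> complex) \<Rightarrow> real" where
  "Acoef D c = (\<Sum>\<alpha>\<in>Adeg D. (cmod (c \<alpha>))\<^sup>2 / mcoef \<alpha>)"

definition ucert :: "(('n::finite \<Rightarrow> nat) \<Rightarrow> complex) \<Rightarrow> ('n \<Rightarrow> nat) \<Rightarrow> ('n \<Rightarrow> nat) \<Rightarrow> complex^'n \<Rightarrow> complex" where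
  "ucert c \<alpha> \<beta> z = cnj (c \<alpha> / of_real (sqrt (mcoef \<alpha>))) * (of_real (sqrt (mcoef \<beta>)) * mnm \<beta> z)
                  - cnj (c \<beta> / of_real (sqrt (mcoef \<beta>))) * (of_real (sqrt (mcoef \<alpha>)) * mnm \<alpha> z)"

lemma sum_mcoef_mnm: "(\<Sum>\<alpha>\<in>Adeg D. mcoef \<alpha> * (cmod (mnm \<alpha> z))\<^sup>2) = Phi D (z::complex^'n::finite)"
proof -
  have "(\<Sum>\<alpha>\<in>Adeg D. mcoef \<alpha> * (cmod (mnm \<alpha> z))\<^sup>2)
      = (\<Sum>m\<in>{..D}. \<Sum>\<alpha>\<in>{\<alpha>. \<alpha> \<in> Adeg D \<and> mdeg \<alpha> = m}. mcoef \<alpha> * (cmod (mnm \<alpha> z))\<^sup>2)"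
    by (rule sum.group[symmetric]) (auto simp: Adeg_def)
  also have "\<dots> = (\<Sum>m\<in>{..D}. (norm z)^(2*m))"
  proof (intro sum.cong refl)
    fix m assume "m \<in> {..D}"
    then have S: "{\<alpha>. \<alpha> \<in> Adeg D \<and> mdeg \<alpha> = m} = {\<alpha>::'n\<Rightarrow>nat. mdeg \<alpha> = m}" by (auto simp: Adeg_def)
    have "(cmod (mnm \<alpha> z))\<^sup>2 = (\<Prod>i\<in>UNIV. ((cmod (z $ i))\<^sup>2) ^ \<alpha> i)" for \<alpha>
    proof -
      have "cmod (mnm \<alpha> z) = (\<Prod>i\<in>UNIV. cmod (z $ i) ^ \<alpha> i)"
        by (simp add: mnm_def prod_norm[symmetric] norm_power)
      then have "(cmod (mnm \<alpha> z))\<^sup>2 = (\<Prod>i\<in>UNIV. (cmod (z $ i) ^ \<alpha> i)\<^sup>2)"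
        by (simp add: prod_power_distrib)
      also have "\<dots> = (\<Prod>i\<in>UNIV. ((cmod (z $ i))\<^sup>2) ^ \<alpha> i)"
        by (intro prod.cong refl) (simp add: power_mult[symmetric] mult.commute)
      finally show ?thesis .
    qed
    then have "(\<Sum>\<alpha>\<in>{\<alpha>. \<alpha> \<in> Adeg D \<and> mdeg \<alpha> = m}. mcoef \<alpha> * (cmod (mnm \<alpha> z))\<^sup>2)
       = (\<Sum>i\<in>UNIV. (cmod (z $ i))\<^sup>2) ^ m"
      unfolding S multinomial by simp
    also have "\<dots> = (norm z)^(2*m)" by (simp add: norm_sq_vec power_mult)
    finally show "(\<Sum>\<alpha>\<in>{\<alpha>. \<alpha> \<in> Adeg D \<and> mdeg \<alpha> = m}. mcoef \<alpha> * (cmod (mnm \<alpha> z))\<^sup>2) = (norm z)^(2*m)" .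
  qed
  finally show ?thesis by (simp add: Phi_def)
qed

lemma certificate:
  assumes g: "\<forall>z. g z = (\<Sum>\<alpha>\<in>Adeg D. c \<alpha> * mnm \<alpha> z)"
  shows "(cmod (g z))\<^sup>2 + (1/2) * (\<Sum>\<alpha>\<in>Adeg D. \<Sum>\<beta>\<in>Adeg D. (cmod (ucert c \<alpha> \<beta> z))\<^sup>2)
       = Acoef D c * Phi D (z::complex^'n::finite)"
proof -
  define x where "x \<alpha> = c \<alpha> / of_real (sqrt (mcoef \<alpha>))" for \<alpha>
  define y where "y \<alpha> = of_real (sqrt (mcoef \<alpha>)) * mnm \<alpha> z" for \<alpha>
  have pos: "mcoef \<alpha> > 0" for \<alpha> :: "'n \<Rightarrow> nat" by (rule mcoef_pos)
  have xy: "x \<alpha> * y \<alpha> = c \<alpha> * mnm \<alpha> z" for \<alpha>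
    using pos[of \<alpha>] by (simp add: x_def y_def)
  have x2: "(cmod (x \<alpha>))\<^sup>2 = (cmod (c \<alpha>))\<^sup>2 / mcoef \<alpha>" for \<alpha>
    using pos[of \<alpha>] by (simp add: x_def norm_divide power_divide)
  have y2: "(cmod (y \<alpha>))\<^sup>2 = mcoef \<alpha> * (cmod (mnm \<alpha> z))\<^sup>2" for \<alpha>
    using pos[of \<alpha>] by (simp add: y_def norm_mult power_mult_distrib)
  have u: "ucert c \<alpha> \<beta> z = cnj (x \<alpha>) * y \<beta> - cnj (x \<beta>) * y \<alpha>" for \<alpha> \<beta>
    by (simp add: ucert_def x_def y_def)
  have "Acoef D c * Phi D z = (\<Sum>\<alpha>\<in>Adeg D. (cmod (x \<alpha>))\<^sup>2) * (\<Sum>\<alpha>\<in>Adeg D. (cmod (y \<alpha>))\<^sup>2)"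
    unfolding x2 y2 sum_mcoef_mnm Acoef_def ..
  also have "\<dots> = (cmod (\<Sum>\<alpha>\<in>Adeg D. x \<alpha> * y \<alpha>))\<^sup>2 + (1/2) * (\<Sum>\<alpha>\<in>Adeg D. \<Sum>\<beta>\<in>Adeg D. (cmod (cnj (x \<alpha>) * y \<beta> - cnj (x \<beta>) * y \<alpha>))\<^sup>2)"
    by (rule lagrange_cmod) simp
  finally show ?thesis unfolding xy u g[rule_format] by simp
qed

lemma cpolyD_mnm: assumes "\<alpha> \<in> Adeg D" shows "cpolyD D (mnm \<alpha>)"
  unfolding cpolyD_def
proof (intro exI[of _ "\<lambda>\<beta>. if \<beta> = \<alpha> then 1 else 0"] allI)
  fix z :: "complex^'a"
  have "(\<Sum>\<beta>\<in>Adeg D. (if \<beta> = \<alpha> then 1 else 0) * mnm \<beta> z) = (\<Sum>\<beta>\<in>Adeg D. if \<beta> = \<alpha> then mnm \<beta> z else 0)"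
    by (intro sum.cong) auto
  also have "\<dots> = mnm \<alpha> z" using assms by simp
  finally show "mnm \<alpha> z = (\<Sum>\<beta>\<in>Adeg D. (if \<beta> = \<alpha> then 1 else 0) * mnm \<beta> z)" by simp
qed

lemma cpolyD_ucert: assumes "\<alpha> \<in> Adeg D" "\<beta> \<in> Adeg D" shows "cpolyD D (ucert c \<alpha> \<beta>)"
proof -
  have "cpolyD D (\<lambda>z. (cnj (c \<alpha> / of_real (sqrt (mcoef \<alpha>))) * of_real (sqrt (mcoef \<beta>))) * mnm \<beta> z
                  - (cnj (c \<beta> / of_real (sqrt (mcoef \<beta>))) * of_real (sqrt (mcoef \<alpha>))) * mnm \<alpha> z)"
    by (intro cpolyD_diff cpolyD_cmult cpolyD_mnm assms)
  then show ?thesis unfolding ucert_def[abs_def] by (simp add: mult.assoc)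
qed

lemma Phi_le: "norm z \<le> 1 \<Longrightarrow> Phi D z \<le> real D + 1"
proof -
  assume "norm z \<le> 1"
  then have "(norm z)^(2*m) \<le> 1" for m by (simp add: power_le_one)
  then have "Phi D z \<le> (\<Sum>m\<le>D. 1)" unfolding Phi_def by (intro sum_mono) auto
  then show ?thesis by simp
qed

lemma Phi_eq: "norm z = 1 \<Longrightarrow> Phi D z = real D + 1"
  by (simp add: Phi_def)

lemma Acoef_nonneg: "Acoef D c \<ge> 0"
  unfolding Acoef_def by (intro sum_nonneg divide_nonneg_pos mcoef_pos) auto

lemma s1: assumes "k > 0" shows "(1 + 1 / real k) ^ k \<le> exp 1"
proof -
  have "(1 + 1 / real k) ^ k \<le> exp (1 / real k) ^ k"
    by (intro power_mono exp_ge_add_one_self) (auto)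
  also have "\<dots> = exp (real k * (1 / real k))" by (rule exp_of_nat_mult[symmetric])
  also have "\<dots> = exp 1" using assms by simp
  finally show ?thesis .
qed

lemma s2: "exp 1 \<le> (1 + 1 / (real k + 1)) ^ (k + 2)"
proof -
  define a where "a = (real k + 1) / (real k + 2)"
  define b where "b = 1 + 1 / (real k + 1)"
  have apos: "a > 0" unfolding a_def by simp
  have b2: "b = (real k + 2) / (real k + 1)" unfolding b_def by (simp add: field_simps)
  have nz: "(real k + 2) * (real k + 1) \<noteq> 0" by (simp add: add_pos_pos)
  have "b * a = ((real k + 2) * (real k + 1)) / ((real k + 1) * (real k + 2))"
    unfolding a_def b2 by (rule times_divide_times_eq)
  also have "\<dots> = 1" using nz by (simp add: mult.commute)
  finally have ab: "b * a = 1" .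
  have "a = 1 + (- 1 / (real k + 2))" unfolding a_def by (simp add: field_simps)
  also have "\<dots> \<le> exp (- 1 / (real k + 2))" by (rule exp_ge_add_one_self)
  finally have a1: "a \<le> exp (- 1 / (real k + 2))" .
  have "a ^ (k + 2) \<le> exp (- 1 / (real k + 2)) ^ (k + 2)"
    by (rule power_mono[OF a1]) (use apos in simp)
  also have "\<dots> = exp (real (k+2) * (- 1 / (real k + 2)))" by (rule exp_of_nat_mult[symmetric])
  also have "real (k+2) * (- 1 / (real k + 2)) = -1" by simp
  finally have a2: "a ^ (k + 2) \<le> exp (-1)" .
  have "exp 1 * a ^ (k + 2) \<le> exp 1 * exp (-1)" by (rule mult_left_mono[OF a2]) simp
  also have "exp 1 * exp (-1) = (1::real)" by (simp flip: exp_add)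
  finally have a3: "exp 1 * a ^ (k + 2) \<le> 1" .
  have "b ^ (k+2) * a ^ (k+2) = (b * a) ^ (k+2)" by (rule power_mult_distrib[symmetric])
  then have "b ^ (k+2) * a ^ (k+2) = 1" by (simp only: ab power_one)
  then have "exp 1 = b ^ (k+2) * (exp 1 * a ^ (k + 2))" by (simp add: algebra_simps)
  also have "\<dots> \<le> b ^ (k+2) * 1" by (rule mult_left_mono[OF a3]) (simp add: b_def)
  finally show ?thesis by (simp add: b_def)
qed

lemma s3: "fact k \<le> (real k + 1) ^ (k + 1) / exp (real k)"
proof (induction k)
  case 0 then show ?case by simp
next
  case (Suc k)
  have "(fact (Suc k) :: real) = (real k + 1) * fact k" by simp
  also have "\<dots> \<le> (real k + 1) * ((real k + 1) ^ (k + 1) / exp (real k))"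
    by (intro mult_left_mono Suc.IH) auto
  also have "\<dots> = (real k + 1) ^ (k + 2) / exp (real k)" by simp
  also have "\<dots> \<le> (real k + 2) ^ (k + 2) / exp (real k + 1)"
  proof -
    have "exp 1 * (real k + 1) ^ (k + 2) \<le> (1 + 1 / (real k + 1)) ^ (k + 2) * (real k + 1) ^ (k + 2)"
      by (intro mult_right_mono s2) auto
    also have "\<dots> = ((1 + 1 / (real k + 1)) * (real k + 1)) ^ (k + 2)"
      by (simp add: power_mult_distrib)
    also have "(1 + 1 / (real k + 1)) * (real k + 1) = real k + 2" by (simp add: field_simps)
    finally have E: "exp 1 * (real k + 1) ^ (k + 2) \<le> (real k + 2) ^ (k + 2)" by simp
    have "(real k + 1) ^ (k + 2) / exp (real k) = exp 1 * (real k + 1) ^ (k + 2) / exp (real k + 1)"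
      by (simp add: exp_add)
    also have "\<dots> \<le> (real k + 2) ^ (k + 2) / exp (real k + 1)"
      by (intro divide_right_mono E) auto
    finally show ?thesis .
  qed
  finally show ?case by (simp add: add_ac)
qed

lemma s4: "(real k + 1) ^ (k + 1) \<le> exp 1 * (real k + 1) * real k ^ k"
proof (cases "k = 0")
  case True then show ?thesis by simp
next
  case False
  have "(real k + 1) ^ k = real k ^ k * (1 + 1 / real k) ^ k"
    using False by (simp add: power_mult_distrib[symmetric] field_simps)
  also have "\<dots> \<le> real k ^ k * exp 1" using s1[of k] False by (intro mult_left_mono) auto
  finally have "(real k + 1) ^ k \<le> real k ^ k * exp 1" .
  then have "(real k + 1) * (real k + 1) ^ k \<le> (real k + 1) * (real k ^ k * exp 1)"
    by (intro mult_left_mono) auto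
  then show ?thesis by (simp add: algebra_simps)
qed

lemma fact_upper: "fact k \<le> exp 1 * (real k + 1) * real k ^ k / exp (real k)"
  using s3[of k] s4[of k] by (smt (verit) divide_right_mono exp_gt_zero)

lemma fact_lower: "real m ^ m / exp (real m) \<le> fact m"
proof (induction m)
  case 0 then show ?case by simp
next
  case (Suc m)
  have "(real m + 1) ^ Suc m / exp (real m + 1) \<le> (real m + 1) * (real m ^ m / exp (real m))"
  proof (cases "m = 0")
    case True then show ?thesis by simp
  next
    case False
    have "(real m + 1) ^ m = real m ^ m * (1 + 1 / real m) ^ m"
      using False by (simp add: power_mult_distrib[symmetric] field_simps)
    also have "\<dots> \<le> real m ^ m * exp 1" using s1[of m] False by (intro mult_left_mono) auto
    finally have "(real m + 1) ^ m \<le> real m ^ m * exp 1" .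
    then have "(real m + 1) * (real m + 1) ^ m / exp (real m + 1) \<le> (real m + 1) * (real m ^ m * exp 1) / exp (real m + 1)"
      by (intro divide_right_mono mult_left_mono) auto
    also have "\<dots> = (real m + 1) * (real m ^ m / exp (real m))" by (simp add: exp_add)
    finally show ?thesis by simp
  qed
  also have "\<dots> \<le> (real m + 1) * fact m" by (intro mult_left_mono Suc.IH) auto
  finally show ?case by (simp add: add_ac)
qed

lemma fps_coeff_bound:
  fixes f :: "complex \<Rightarrow> complex"
  assumes hol: "f holomorphic_on ball 0 R" and fe: "f has_fps_expansion F"
    and rho: "0 < \<rho>" "\<rho> < R" and bnd: "\<forall>w. norm w = \<rho> \<longrightarrow> norm (f w) \<le> B"
  shows "norm (F $ k) \<le> B / \<rho> ^ k"
proof -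
  have "F $ k = (deriv ^^ k) f 0 / fact k" by (rule fps_nth_fps_expansion[OF fe])
  moreover have "norm ((deriv ^^ k) f 0) \<le> fact k * B / \<rho> ^ k"
  proof (rule Cauchy_inequality)
    show "f holomorphic_on ball 0 \<rho>" by (rule holomorphic_on_subset[OF hol]) (use rho in auto)
    have "cball 0 \<rho> \<subseteq> ball (0::complex) R" using rho by auto
    then show "continuous_on (cball 0 \<rho>) f"
      using holomorphic_on_imp_continuous_on[OF hol] by (rule continuous_on_subset[rotated])
    show "0 < \<rho>" by fact
    show "norm (f x) \<le> B" if "norm (0 - x) = \<rho>" for x using bnd that by auto
  qed
  ultimately have "norm (F $ k) = norm ((deriv ^^ k) f 0) / fact k" by (simp add: norm_divide)
  also have "\<dots> \<le> (fact k * B / \<rho> ^ k) / fact k"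
    by (rule divide_right_mono) (fact, simp)
  also have "\<dots> = B / \<rho> ^ k" by simp
  finally show ?thesis .
qed

lemma poly_coeff_bound:
  fixes a :: "'k \<Rightarrow> complex" and E :: "'k \<Rightarrow> nat"
  assumes A: "finite A" "inj_on E A" and bnd: "\<forall>l. norm l = 1 \<longrightarrow> norm (\<Sum>k\<in>A. a k * l ^ E k) \<le> \<epsilon>"
    and k0: "k0 \<in> A"
  shows "norm (a k0) \<le> \<epsilon>"
proof -
  let ?f = "\<lambda>l. \<Sum>k\<in>A. a k * l ^ E k"
  let ?F = "\<Sum>k\<in>A. fps_const (a k) * fps_X ^ E k"
  have fe: "?f has_fps_expansion ?F"
    by (intro has_fps_expansion_sum has_fps_expansion_cmult_left has_fps_expansion_fps_X_power)
  have hol: "?f holomorphic_on ball 0 2" by (intro holomorphic_intros)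
  have "norm (?F $ E k0) \<le> \<epsilon> / 1 ^ E k0"
    by (rule fps_coeff_bound[OF hol fe]) (use bnd in auto)
  moreover have "?F $ E k0 = a k0"
  proof -
    have "?F $ E k0 = (\<Sum>k\<in>A. if k = k0 then a k else 0)"
      unfolding fps_sum_nth fps_mult_left_const_nth fps_X_power_nth
      using A k0 by (intro sum.cong refl) (auto dest: inj_onD)
    also have "\<dots> = a k0" using A k0 by simp
    finally show ?thesis .
  qed
  ultimately show ?thesis by simp
qed

lemma kronecker:
  fixes A :: "('n::finite \<Rightarrow> nat) set"
  assumes "finite A"
  shows "\<exists>e::'n\<Rightarrow>nat. inj_on (\<lambda>\<alpha>. \<Sum>i\<in>UNIV. e i * \<alpha> i) A"
proof -
  obtain idx :: "'n \<Rightarrow> nat" and N where idx: "inj_on idx UNIV"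
    using finite_imp_inj_to_nat_seg[of "UNIV::'n set"] by auto
  define P where "P \<alpha> \<beta> = (\<Sum>i\<in>UNIV. monom (real (\<alpha> i) - real (\<beta> i)) (idx i))" for \<alpha> \<beta> :: "'n \<Rightarrow> nat"
  have Pnz: "P \<alpha> \<beta> \<noteq> 0" if "\<alpha> \<noteq> \<beta>" for \<alpha> \<beta>
  proof -
    obtain i0 where i0: "\<alpha> i0 \<noteq> \<beta> i0" using \<open>\<alpha> \<noteq> \<beta>\<close> by auto
    have "coeff (P \<alpha> \<beta>) (idx i0) = (\<Sum>i\<in>UNIV. if i = i0 then real (\<alpha> i) - real (\<beta> i) else 0)"
      unfolding P_def coeff_sum coeff_monom using idx by (intro sum.cong refl) (auto dest: inj_onD)
    also have "\<dots> = real (\<alpha> i0) - real (\<beta> i0)" by simp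
    finally show ?thesis using i0 by auto
  qed
  define U where "U = (\<Union>p\<in>{p\<in>A \<times> A. fst p \<noteq> snd p}. {x. poly (P (fst p) (snd p)) x = 0})"
  have "finite U" unfolding U_def using assms
    by (intro finite_UN_I) (auto intro!: poly_roots_finite Pnz)
  then have "finite (of_nat -` U :: nat set)" by (intro finite_vimageI) (auto simp: inj_on_def)
  then obtain t :: nat where t: "t \<notin> of_nat -` U" using ex_new_if_finite[OF infinite_UNIV_nat] by blast
  define e where "e i = t ^ idx i" for i
  have "inj_on (\<lambda>\<alpha>. \<Sum>i\<in>UNIV. e i * \<alpha> i) A"
  proof (rule inj_onI, rule ccontr)
    fix \<alpha> \<beta> assume ab: "\<alpha> \<in> A" "\<beta> \<in> A" "(\<Sum>i\<in>UNIV. e i * \<alpha> i) = (\<Sum>i\<in>UNIV. e i * \<beta> i)" "\<alpha> \<noteq> \<beta>"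
    have "poly (P \<alpha> \<beta>) (real t) = (\<Sum>i\<in>UNIV. real (e i * \<alpha> i)) - (\<Sum>i\<in>UNIV. real (e i * \<beta> i))"
      unfolding P_def poly_sum poly_monom e_def by (simp add: algebra_simps sum_subtractf)
    also have "\<dots> = 0" using ab(3) by (simp only: of_nat_sum[symmetric])
    finally have "real t \<in> U" unfolding U_def using ab by auto
    then show False using t by auto
  qed
  then show ?thesis by blast
qed

lemma coef_bound:
  fixes g :: "complex^'n::finite \<Rightarrow> complex" and r :: "'n \<Rightarrow> real"
  assumes g: "\<forall>z. g z = (\<Sum>\<alpha>\<in>Adeg D. c \<alpha> * mnm \<alpha> z)"
    and bnd: "\<forall>z. norm z = 1 \<longrightarrow> cmod (g z) \<le> \<epsilon>"
    and a0: "\<alpha>0 \<in> Adeg D" and r: "\<forall>i. r i \<ge> 0" "(\<Sum>i\<in>UNIV. (r i)\<^sup>2) = 1"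
  shows "cmod (c \<alpha>0) * (\<Prod>i\<in>UNIV. r i ^ \<alpha>0 i) \<le> \<epsilon>"
proof -
  obtain e :: "'n \<Rightarrow> nat" where e: "inj_on (\<lambda>\<alpha>. \<Sum>i\<in>UNIV. e i * \<alpha> i) (Adeg D)"
    using kronecker[OF finite_Adeg] by blast
  define E where "E \<alpha> = (\<Sum>i\<in>UNIV. e i * \<alpha> i)" for \<alpha> :: "'n \<Rightarrow> nat"
  define a where "a \<alpha> = c \<alpha> * of_real (\<Prod>i\<in>UNIV. r i ^ \<alpha> i)" for \<alpha>
  have "norm (a \<alpha>0) \<le> \<epsilon>"
  proof (rule poly_coeff_bound[of "Adeg D" E])
    show "inj_on E (Adeg D)" using e unfolding E_def .
    show "\<forall>l. norm l = 1 \<longrightarrow> norm (\<Sum>\<alpha>\<in>Adeg D. a \<alpha> * l ^ E \<alpha>) \<le> \<epsilon>"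
    proof (intro allI impI)
      fix l :: complex assume l: "norm l = 1"
      define w where "w = (\<chi> i. complex_of_real (r i) * l ^ e i)"
      have "(norm w)\<^sup>2 = 1" unfolding norm_sq_vec w_def using l r
        by (simp add: norm_mult norm_power)
      then have nw: "norm w = 1" using norm_ge_zero[of w] by (simp add: power2_eq_1_iff)
      have "mnm \<alpha> w = of_real (\<Prod>i\<in>UNIV. r i ^ \<alpha> i) * l ^ E \<alpha>" for \<alpha>
        by (simp add: mnm_def w_def E_def power_mult_distrib prod.distrib power_sum power_mult[symmetric] mult.commute)
      then have "g w = (\<Sum>\<alpha>\<in>Adeg D. a \<alpha> * l ^ E \<alpha>)" unfolding g[rule_format] a_def
        by (simp add: mult.assoc)
      then show "norm (\<Sum>\<alpha>\<in>Adeg D. a \<alpha> * l ^ E \<alpha>) \<le> \<epsilon>" using bnd nw by metis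
    qed
  qed (use a0 in auto)
  moreover have "norm (a \<alpha>0) = cmod (c \<alpha>0) * (\<Prod>i\<in>UNIV. r i ^ \<alpha>0 i)"
  proof -
    have "norm (a \<alpha>0) = cmod (c \<alpha>0) * norm (complex_of_real (\<Prod>i\<in>UNIV. r i ^ \<alpha>0 i))"
      by (simp only: a_def norm_mult)
    also have "norm (complex_of_real (\<Prod>i\<in>UNIV. r i ^ \<alpha>0 i)) = (\<Prod>i\<in>UNIV. r i ^ \<alpha>0 i)"
      by (simp only: norm_of_real) (use r in \<open>simp add: prod_nonneg\<close>)
    finally show ?thesis .
  qed
  ultimately show ?thesis by simp
qed

lemma inv_mcoef_bound:
  fixes \<alpha> :: "'n::finite \<Rightarrow> nat"
  assumes m: "mdeg \<alpha> = m" "m > 0"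
  shows "1 / mcoef \<alpha> \<le> exp 1 ^ CARD('n) * (real m + 1) ^ CARD('n) * (\<Prod>i\<in>UNIV. (real (\<alpha> i) / real m) ^ \<alpha> i)"
proof -
  have sa: "(\<Sum>i\<in>UNIV. \<alpha> i) = m" using m by (simp add: mdeg_def)
  have "(\<Prod>i\<in>UNIV. fact (\<alpha> i) :: real) \<le> (\<Prod>i\<in>UNIV. exp 1 * (real (\<alpha> i) + 1) * real (\<alpha> i) ^ \<alpha> i / exp (real (\<alpha> i)))"
    by (intro prod_mono conjI fact_upper) auto
  also have "\<dots> = exp 1 ^ CARD('n) * (\<Prod>i\<in>UNIV. real (\<alpha> i) + 1) * (\<Prod>i\<in>UNIV. real (\<alpha> i) ^ \<alpha> i) / exp (real m)"
    by (simp add: prod.distrib prod_dividef exp_sum[symmetric] sa flip: of_nat_sum)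
  finally have P: "(\<Prod>i\<in>UNIV. fact (\<alpha> i) :: real) \<le> exp 1 ^ CARD('n) * (\<Prod>i\<in>UNIV. real (\<alpha> i) + 1) * (\<Prod>i\<in>UNIV. real (\<alpha> i) ^ \<alpha> i) / exp (real m)" .
  have L: "real m ^ m / exp (real m) \<le> fact m" by (rule fact_lower)
  have mm: "real m ^ m = (\<Prod>i\<in>UNIV. real m ^ \<alpha> i)" by (simp add: power_sum[symmetric] sa)
  have T: "(\<Prod>i\<in>UNIV. real (\<alpha> i) ^ \<alpha> i) / real m ^ m = (\<Prod>i\<in>UNIV. (real (\<alpha> i) / real m) ^ \<alpha> i)"
    unfolding mm by (simp add: prod_dividef power_divide)
  have Q: "(\<Prod>i\<in>UNIV. real (\<alpha> i) + 1) \<le> (real m + 1) ^ CARD('n)"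
  proof -
    have "(\<Prod>i\<in>UNIV. real (\<alpha> i) + 1) \<le> (\<Prod>i\<in>(UNIV::'n set). real m + 1)"
    proof (intro prod_mono conjI)
      fix i :: 'n
      have "\<alpha> i \<le> m" unfolding sa[symmetric] by (rule member_le_sum) auto
      then show "real (\<alpha> i) + 1 \<le> real m + 1" by simp
    qed auto
    then show ?thesis by simp
  qed
  have mpos: "real m ^ m > 0" using m by simp
  have "1 / mcoef \<alpha> = (\<Prod>i\<in>UNIV. fact (\<alpha> i) :: real) / fact m"
    unfolding mcoef_def m by simp
  also have "\<dots> \<le> (exp 1 ^ CARD('n) * (\<Prod>i\<in>UNIV. real (\<alpha> i) + 1) * (\<Prod>i\<in>UNIV. real (\<alpha> i) ^ \<alpha> i) / exp (real m)) / (real m ^ m / exp (real m))"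
    by (intro frac_le P L) (use mpos in \<open>auto simp: prod_nonneg intro!: divide_pos_pos\<close>)
  also have "\<dots> = exp 1 ^ CARD('n) * (\<Prod>i\<in>UNIV. real (\<alpha> i) + 1) * ((\<Prod>i\<in>UNIV. real (\<alpha> i) ^ \<alpha> i) / real m ^ m)"
    by (simp add: field_simps)
  also have "\<dots> \<le> exp 1 ^ CARD('n) * (real m + 1) ^ CARD('n) * ((\<Prod>i\<in>UNIV. real (\<alpha> i) ^ \<alpha> i) / real m ^ m)"
    by (intro mult_right_mono mult_left_mono Q) (auto simp: prod_nonneg)
  finally show ?thesis unfolding T .
qed

lemma coef_sq_bound:
  fixes g :: "complex^'n::finite \<Rightarrow> complex"
  assumes g: "\<forall>z. g z = (\<Sum>\<alpha>\<in>Adeg D. c \<alpha> * mnm \<alpha> z)"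
    and bnd: "\<forall>z. norm z = 1 \<longrightarrow> cmod (g z) \<le> \<epsilon>" and a: "\<alpha> \<in> Adeg D"
  shows "(cmod (c \<alpha>))\<^sup>2 / mcoef \<alpha> \<le> \<epsilon>\<^sup>2 * exp 1 ^ CARD('n) * (real D + 1) ^ CARD('n)"
proof (cases "mdeg \<alpha> = 0")
  case True
  then have a0: "\<alpha> = 0" by (auto simp: mdeg_def fun_eq_iff)
  have mc: "mcoef \<alpha> = 1" by (simp add: a0 mcoef_def mdeg_def)
  obtain i0 :: 'n where True by blast
  define r where "r i = (if i = i0 then 1 else 0::real)" for i
  have "(\<Sum>i\<in>UNIV. (r i)\<^sup>2) = (\<Sum>i\<in>UNIV. if i = i0 then 1 else 0)" by (intro sum.cong) (auto simp: r_def)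
  then have "(\<Sum>i\<in>UNIV. (r i)\<^sup>2) = 1" by simp
  then have "cmod (c \<alpha>) * (\<Prod>i\<in>UNIV. r i ^ \<alpha> i) \<le> \<epsilon>"
    by (intro coef_bound[OF g bnd a]) (auto simp: r_def)
  then have c1: "cmod (c \<alpha>) \<le> \<epsilon>" by (simp add: a0)
  then have "(cmod (c \<alpha>))\<^sup>2 \<le> \<epsilon>\<^sup>2" by (simp add: power_mono)
  also have "\<dots> \<le> \<epsilon>\<^sup>2 * exp 1 ^ CARD('n) * (real D + 1) ^ CARD('n)"
  proof -
    have e1: "1 \<le> exp (1::real) ^ CARD('n)" by (rule one_le_power) simp
    have d1: "1 \<le> (real D + 1) ^ CARD('n)" by (rule one_le_power) simp
    have "1 * 1 \<le> exp 1 ^ CARD('n) * (real D + 1) ^ CARD('n)"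
      by (rule mult_mono[OF e1 d1]) auto
    then have "1 \<le> exp 1 ^ CARD('n) * (real D + 1) ^ CARD('n)" by simp
    then have "\<epsilon>\<^sup>2 * 1 \<le> \<epsilon>\<^sup>2 * (exp 1 ^ CARD('n) * (real D + 1) ^ CARD('n))"
      by (intro mult_left_mono) auto
    then show ?thesis by (simp add: mult.assoc)
  qed
  finally show ?thesis by (simp add: mc)
next
  case False
  define m where "m = mdeg \<alpha>"
  have mpos: "m > 0" using False by (simp add: m_def)
  have mD: "m \<le> D" using a by (simp add: m_def Adeg_def)
  define r where "r i = sqrt (real (\<alpha> i) / real m)" for i
  define T where "T = (\<Prod>i\<in>UNIV. (real (\<alpha> i) / real m) ^ \<alpha> i)"
  have sa: "(\<Sum>i\<in>UNIV. real (\<alpha> i)) = real m" by (simp add: m_def mdeg_def)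
  have "(\<Sum>i\<in>UNIV. (r i)\<^sup>2) = (\<Sum>i\<in>UNIV. real (\<alpha> i) / real m)" by (simp add: r_def)
  also have "\<dots> = 1" using mpos by (simp add: sum_divide_distrib[symmetric] sa)
  finally have rs: "(\<Sum>i\<in>UNIV. (r i)\<^sup>2) = 1" .
  have "cmod (c \<alpha>) * (\<Prod>i\<in>UNIV. r i ^ \<alpha> i) \<le> \<epsilon>"
    by (intro coef_bound[OF g bnd a] allI rs) (simp add: r_def)
  moreover have P2: "(\<Prod>i\<in>UNIV. r i ^ \<alpha> i)\<^sup>2 = T"
  proof -
    have "(\<Prod>i\<in>UNIV. r i ^ \<alpha> i)\<^sup>2 = (\<Prod>i\<in>UNIV. (r i ^ \<alpha> i)\<^sup>2)"
      by (rule prod_power_distrib)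
    also have "\<dots> = (\<Prod>i\<in>UNIV. ((r i)\<^sup>2) ^ \<alpha> i)"
      by (intro prod.cong refl) (simp add: power_mult[symmetric] mult.commute)
    also have "\<dots> = T" unfolding T_def by (intro prod.cong refl) (simp add: r_def)
    finally show ?thesis .
  qed
  moreover have P0: "(\<Prod>i\<in>UNIV. r i ^ \<alpha> i) \<ge> 0" by (simp add: r_def prod_nonneg)
  ultimately have cT: "(cmod (c \<alpha>))\<^sup>2 * T \<le> \<epsilon>\<^sup>2"
  proof -
    assume a1: "cmod (c \<alpha>) * (\<Prod>i\<in>UNIV. r i ^ \<alpha> i) \<le> \<epsilon>" and a2: "(\<Prod>i\<in>UNIV. r i ^ \<alpha> i)\<^sup>2 = T"
      and a3: "(\<Prod>i\<in>UNIV. r i ^ \<alpha> i) \<ge> 0"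
    have "0 \<le> cmod (c \<alpha>) * (\<Prod>i\<in>UNIV. r i ^ \<alpha> i)" using a3 by simp
    then have "(cmod (c \<alpha>) * (\<Prod>i\<in>UNIV. r i ^ \<alpha> i))\<^sup>2 \<le> \<epsilon>\<^sup>2" by (rule power_mono[OF a1])
    then show ?thesis by (simp only: power_mult_distrib a2)
  qed
  have "(cmod (c \<alpha>))\<^sup>2 / mcoef \<alpha> = (cmod (c \<alpha>))\<^sup>2 * (1 / mcoef \<alpha>)" by simp
  also have "\<dots> \<le> (cmod (c \<alpha>))\<^sup>2 * (exp 1 ^ CARD('n) * (real m + 1) ^ CARD('n) * T)"
    unfolding T_def by (intro mult_left_mono inv_mcoef_bound) (use mpos in \<open>auto simp: m_def\<close>)
  also have "\<dots> = ((cmod (c \<alpha>))\<^sup>2 * T) * (exp 1 ^ CARD('n) * (real m + 1) ^ CARD('n))" by simp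
  also have "\<dots> \<le> \<epsilon>\<^sup>2 * (exp 1 ^ CARD('n) * (real D + 1) ^ CARD('n))"
    by (intro mult_mono cT mult_left_mono power_mono) (use mD in auto)
  finally show ?thesis by (simp add: mult.assoc)
qed

lemma Acoef_bound:
  fixes g :: "complex^'n::finite \<Rightarrow> complex"
  assumes g: "\<forall>z. g z = (\<Sum>\<alpha>\<in>Adeg D. c \<alpha> * mnm \<alpha> z)"
    and bnd: "\<forall>z. norm z = 1 \<longrightarrow> cmod (g z) \<le> \<epsilon>"
  shows "Acoef D c \<le> \<epsilon>\<^sup>2 * exp 1 ^ CARD('n) * (real D + 1) ^ (2 * CARD('n))"
proof -
  have "Acoef D c \<le> (\<Sum>\<alpha>\<in>(Adeg D :: ('n \<Rightarrow> nat) set). \<epsilon>\<^sup>2 * exp 1 ^ CARD('n) * (real D + 1) ^ CARD('n))"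
    unfolding Acoef_def by (rule sum_mono) (rule coef_sq_bound[OF g bnd])
  also have "\<dots> = real (card (Adeg D :: ('n \<Rightarrow> nat) set)) * (\<epsilon>\<^sup>2 * exp 1 ^ CARD('n) * (real D + 1) ^ CARD('n))"
    by simp
  also have "\<dots> \<le> (real D + 1) ^ CARD('n) * (\<epsilon>\<^sup>2 * exp 1 ^ CARD('n) * (real D + 1) ^ CARD('n))"
  proof (rule mult_right_mono)
    have "card (Adeg D :: ('n \<Rightarrow> nat) set) \<le> (D+1) ^ CARD('n)" by (rule card_Adeg)
    then have "real (card (Adeg D :: ('n \<Rightarrow> nat) set)) \<le> real ((D+1) ^ CARD('n))" by (simp only: of_nat_le_iff)
    then show "real (card (Adeg D :: ('n \<Rightarrow> nat) set)) \<le> (real D + 1) ^ CARD('n)" by (simp add: add.commute)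
  qed auto
  also have "\<dots> = \<epsilon>\<^sup>2 * exp 1 ^ CARD('n) * (real D + 1) ^ (2 * CARD('n))"
    by (simp add: power_mult mult_2 power_add)
  finally show ?thesis .
qed

lemma norm_smult_vec: "norm (l *s (z::complex^'n::finite)) = cmod l * norm z"
proof -
  have "(norm (l *s z))\<^sup>2 = (cmod l * norm z)\<^sup>2"
    unfolding norm_sq_vec power_mult_distrib by (simp add: norm_mult power_mult_distrib sum_distrib_left)
  then show ?thesis by (simp add: power2_eq_iff_nonneg)
qed

lemma cpoly_continuous: "cpoly f \<Longrightarrow> continuous_on S f"
  by (intro continuous_at_imp_continuous_on ballI)
     (metis cdiff_cpoly cdiff_def has_derivative_continuous)

lemma mnm_le1: "norm (z::complex^'n::finite) \<le> 1 \<Longrightarrow> cmod (mnm \<alpha> z) \<le> 1"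
proof -
  assume z: "norm z \<le> 1"
  have "cmod (mnm \<alpha> z) = (\<Prod>i\<in>UNIV. cmod (z $ i) ^ \<alpha> i)"
    by (simp add: mnm_def prod_norm[symmetric] norm_power)
  also have "\<dots> \<le> (\<Prod>i\<in>(UNIV::'n set). 1)"
  proof (intro prod_mono conjI)
    fix i have "cmod (z $ i) \<le> 1" using Finite_Cartesian_Product.norm_nth_le[of z i] z by linarith
    then show "cmod (z $ i) ^ \<alpha> i \<le> 1" by (simp add: power_le_one)
  qed auto
  finally show ?thesis by simp
qed

lemma exists_inverse_approx:
  fixes q :: "complex^'n::finite \<Rightarrow> complex"
  assumes qp: "cpoly q" and qnz: "\<forall>z\<in>cball 0 1. q z \<noteq> 0"
  shows "\<exists>d B R. cpolyD d q \<and> R > 1 \<and> B \<ge> 0 \<and> (\<forall>K. \<exists>r. cpolyD K r \<and>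
            (\<forall>z. norm z = 1 \<longrightarrow> cmod (1 - q z * r z) \<le> B * (real K + 1) / R ^ K))"
proof -
  obtain d where dq: "cpolyD d q" using cpoly_cpolyD[OF qp] by blast
  then obtain cq where cq: "\<forall>z. q z = (\<Sum>\<alpha>\<in>Adeg d. cq \<alpha> * mnm \<alpha> z)" by (auto simp: cpolyD_def)
  define qh where "qh j z = (\<Sum>\<alpha>\<in>{\<alpha>\<in>Adeg d. mdeg \<alpha> = j}. cq \<alpha> * mnm \<alpha> z)" for j z
  have qsum: "q z = (\<Sum>j\<le>d. qh j z)" for z
    unfolding cq[rule_format] qh_def by (rule sum.group[symmetric]) (auto simp: Adeg_def)
  have qh_scale: "qh j (l *s z) = l ^ j * qh j z" for j l z
    unfolding qh_def by (simp add: mnm_scale sum_distrib_left mult_ac)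
  have qline: "q (l *s z) = (\<Sum>j\<le>d. qh j z * l ^ j)" for l z
    unfolding qsum qh_scale by (simp add: mult.commute)
  have qh0: "qh 0 z = q 0" for z
  proof -
    have "q ((0::complex) *s z) = (\<Sum>j\<le>d. qh j z * 0 ^ j)" by (rule qline)
    also have "\<dots> = (\<Sum>j\<le>d. if j = 0 then qh j z else 0)" by (intro sum.cong) auto
    also have "\<dots> = qh 0 z" by simp
    finally show ?thesis by simp
  qed
  have q0: "q 0 \<noteq> 0" using qnz by simp
  have cpqh: "cpolyD j (qh j)" for j
  proof -
    define c' where "c' \<alpha> = (if \<alpha> \<in> Adeg d \<and> mdeg \<alpha> = j then cq \<alpha> else 0)" for \<alpha>
    have "qh j z = (\<Sum>\<alpha>\<in>Adeg j. c' \<alpha> * mnm \<alpha> z)" for z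
      unfolding qh_def by (rule sum.mono_neutral_cong_left) (auto simp: c'_def Adeg_def)
    then show ?thesis by (auto simp: cpolyD_def)
  qed
  define Cq where "Cq = (\<Sum>\<alpha>\<in>Adeg d. cmod (cq \<alpha>))"
  have Cq0: "Cq \<ge> 0" unfolding Cq_def by (simp add: sum_nonneg)
  have qh_bound: "cmod (qh j z) \<le> Cq" if "norm z \<le> 1" for j z
  proof -
    have "cmod (qh j z) \<le> (\<Sum>\<alpha>\<in>{\<alpha>\<in>Adeg d. mdeg \<alpha> = j}. cmod (cq \<alpha> * mnm \<alpha> z))"
      unfolding qh_def by (rule norm_sum)
    also have "\<dots> \<le> (\<Sum>\<alpha>\<in>{\<alpha>\<in>Adeg d. mdeg \<alpha> = j}. cmod (cq \<alpha>))"
      by (intro sum_mono) (auto simp: norm_mult intro!: mult_left_le mnm_le1 that)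
    also have "\<dots> \<le> Cq" unfolding Cq_def by (rule sum_mono2) auto
    finally show ?thesis .
  qed
  define Qf where "Qf z = (\<Sum>j\<le>d. fps_const (qh j z) * fps_X ^ j)" for z
  have Qf_nth: "Qf z $ j = (if j \<le> d then qh j z else 0)" for z j
    unfolding Qf_def fps_sum_nth fps_mult_left_const_nth fps_X_power_nth
    by (auto simp: if_distrib cong: if_cong)
  have Qf0: "Qf z $ 0 = q 0" for z by (simp add: Qf_nth qh0)
  define fc where "fc i z = (inverse (Qf z)) $ i" for i z
  have fc_rec: "fc n z = - inverse (q 0) * (\<Sum>i\<in>{1..n}. Qf z $ i * fc (n - i) z)" if "n > 0" for n z
    using that unfolding fc_def fps_inverse_def
    by (simp add: fps_right_inverse_constructor_rec Qf0)
  have fc0: "fc 0 z = inverse (q 0)" for z by (simp add: fc_def Qf0)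
  have cpfc: "cpolyD n (fc n)" for n
  proof (induction n rule: less_induct)
    case (less n)
    show ?case
    proof (cases "n = 0")
      case True then show ?thesis by (simp add: fc0 cpolyD_const)
    next
      case False
      have "cpolyD n (\<lambda>z. Qf z $ i * fc (n - i) z)" if "i \<in> {1..n}" for i
      proof -
        have "cpolyD (i + (n - i)) (\<lambda>z. (if i \<le> d then qh i z else 0) * fc (n - i) z)"
        proof (rule cpolyD_mult)
          show "cpolyD i (\<lambda>z. if i \<le> d then qh i z else 0)"
            by (cases "i \<le> d") (auto simp: cpqh cpolyD_const)
          show "cpolyD (n - i) (fc (n - i))" using less that by auto
        qed
        then show ?thesis using that by (simp add: Qf_nth)
      qed
      then have "cpolyD n (\<lambda>z. - inverse (q 0) * (\<Sum>i\<in>{1..n}. Qf z $ i * fc (n - i) z))"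
        by (intro cpolyD_cmult cpolyD_sum) auto
      then show ?thesis using fc_rec False by (simp add: fun_eq_iff)
    qed
  qed
  have conv: "(\<Sum>j\<le>m. Qf z $ j * fc (m - j) z) = (if m = 0 then 1 else 0)" for m z
  proof -
    have "Qf z * inverse (Qf z) = 1" by (rule inverse_mult_eq_1') (simp add: Qf0 q0)
    then have "(Qf z * inverse (Qf z)) $ m = (if m = 0 then 1 else 0)" by simp
    then show ?thesis unfolding fps_mult_nth fc_def by (simp add: atLeast0AtMost)
  qed
  have "continuous_on UNIV q" by (rule cpoly_continuous[OF qp])
  then have oU: "open {w. q w \<noteq> 0}" by (intro open_Collect_neq) auto
  obtain \<eta> where \<eta>: "\<eta> > 0" "(\<Union>x\<in>cball 0 1. ball x \<eta>) \<subseteq> {w. q w \<noteq> 0}"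
    using compact_subset_open_imp_ball_epsilon_subset[OF compact_cball oU] qnz by blast
  have ballU: "q w \<noteq> 0" if "norm w < 1 + \<eta>" for w
  proof (cases "norm w \<le> 1")
    case True then show ?thesis using qnz by auto
  next
    case False
    define w' where "w' = w /\<^sub>R norm w"
    have nw0: "norm w \<noteq> 0" using False by auto
    then have "norm w' = 1" by (simp add: w'_def)
    moreover have "dist w' w < \<eta>"
    proof -
      have "w' - w = (1 / norm w - 1) *\<^sub>R w" by (simp add: w'_def algebra_simps inverse_eq_divide)
      then have "norm (w' - w) = \<bar>1 / norm w - 1\<bar> * norm w" by simp
      also have "\<dots> = norm w - 1" using False nw0 by (simp add: field_simps abs_if)
      finally show ?thesis using that by (simp add: dist_norm)
    qed
    ultimately have "w' \<in> cball 0 1" "w \<in> ball w' \<eta>" by (auto simp: dist_norm)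
    then show ?thesis using \<eta>(2) by blast
  qed
  define R where "R = 1 + \<eta> / 2"
  have R1: "R > 1" using \<eta> by (simp add: R_def)
  have "compact ((\<lambda>w. inverse (q w)) ` cball 0 R)"
  proof (intro compact_continuous_image compact_cball continuous_on_inverse)
    show "continuous_on (cball 0 R) q" by (rule cpoly_continuous[OF qp])
    show "\<forall>w\<in>cball 0 R. q w \<noteq> 0" using ballU \<eta> by (auto simp: R_def)
  qed
  then obtain B0 where B0: "\<forall>w\<in>cball 0 R. cmod (inverse (q w)) \<le> B0"
    by (auto dest!: compact_imp_bounded simp: bounded_iff)
  have B00: "B0 \<ge> 0" using B0[rule_format, of 0] R1 by (auto intro: order_trans[OF norm_ge_zero])
  have fc_bound: "cmod (fc i z) \<le> B0 / R ^ i" if z: "norm z = 1" for i z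
  proof -
    let ?P = "\<lambda>l. \<Sum>j\<le>d. qh j z * l ^ j"
    have Pexp: "?P has_fps_expansion Qf z" unfolding Qf_def
      by (intro has_fps_expansion_sum has_fps_expansion_cmult_left has_fps_expansion_fps_X_power)
    have Pnz: "?P l \<noteq> 0" if "l \<in> ball 0 (1 + \<eta>)" for l
      unfolding qline[symmetric] using that z by (intro ballU) (simp add: norm_smult_vec)
    have hol: "(\<lambda>l. inverse (?P l)) holomorphic_on ball 0 (1 + \<eta>)"
      using Pnz by (intro holomorphic_intros) auto
    have fexp: "(\<lambda>l. inverse (?P l)) has_fps_expansion inverse (Qf z)"
      by (rule has_fps_expansion_inverse[OF Pexp]) (simp add: Qf0 q0)
    show ?thesis unfolding fc_def
    proof (rule fps_coeff_bound[OF hol fexp])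
      show "0 < R" "R < 1 + \<eta>" using R1 \<eta> by (auto simp: R_def)
      show "\<forall>w. norm w = R \<longrightarrow> norm (inverse (?P w)) \<le> B0"
      proof (intro allI impI)
        fix w :: complex assume "norm w = R"
        then have "w *s z \<in> cball 0 R" using z by (simp add: norm_smult_vec)
        then show "norm (inverse (?P w)) \<le> B0" using B0 unfolding qline[symmetric] by blast
      qed
    qed
  qed
  define B where "B = real (d + 1) * Cq * B0 * R ^ d"
  have "\<forall>K. \<exists>r. cpolyD K r \<and> (\<forall>z. norm z = 1 \<longrightarrow> cmod (1 - q z * r z) \<le> B * (real K + 1) / R ^ K)"
  proof
    fix K
    define r where "r z = (\<Sum>i\<le>K. fc i z)" for z
    have cpr: "cpolyD K r" unfolding r_def[abs_def]
      by (intro cpolyD_sum) (auto intro: cpolyD_mono[OF cpfc])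
    have "cmod (1 - q z * r z) \<le> B * (real K + 1) / R ^ K" if z: "norm z = 1" for z
    proof -
      define a where "a j = Qf z $ j" for j
      define b where "b i = fc i z" for i
      have qa: "q z = (\<Sum>j\<le>d. a j)" unfolding qsum a_def Qf_nth by simp
      have a0: "a j = 0" if "j > d" for j using that by (simp add: a_def Qf_nth)
      have a0': "j \<le> d" if "a j \<noteq> 0" for j using that a0 not_le by blast
      let ?T = "{p::nat\<times>nat. fst p + snd p < K + 1}"
      have prod: "q z * r z = (\<Sum>j\<le>d. \<Sum>i\<le>K. a j * b i)"
        unfolding qa r_def b_def sum_product ..
      also have "\<dots> = (\<Sum>j\<le>d. \<Sum>i\<le>K. (if i + j \<le> K then a j * b i else 0))
                    + (\<Sum>j\<le>d. \<Sum>i\<le>K. (if i + j \<le> K then 0 else a j * b i))"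
        by (simp add: sum.distrib[symmetric] if_distrib cong: if_cong)
      finally have split: "q z * r z = (\<Sum>j\<le>d. \<Sum>i\<le>K. (if i + j \<le> K then a j * b i else 0))
                    + (\<Sum>j\<le>d. \<Sum>i\<le>K. (if i + j \<le> K then 0 else a j * b i))" .
      have main: "(\<Sum>j\<le>d. \<Sum>i\<le>K. (if i + j \<le> K then a j * b i else 0)) = 1"
      proof -
        have "(\<Sum>j\<le>d. \<Sum>i\<le>K. (if i + j \<le> K then a j * b i else 0))
            = (\<Sum>p\<in>{..d} \<times> {..K}. (if snd p + fst p \<le> K then a (fst p) * b (snd p) else 0))"
          by (simp add: sum.cartesian_product split_def)
        also have "\<dots> = (\<Sum>p\<in>{..d+K} \<times> {..K}. (if snd p + fst p \<le> K then a (fst p) * b (snd p) else 0))"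
          by (rule sum.mono_neutral_left) (auto dest: a0')
        also have "\<dots> = (\<Sum>p\<in>?T. a (fst p) * b (snd p))"
          by (rule sum.mono_neutral_cong_right) auto
        also have "\<dots> = (\<Sum>(j,i)\<in>?T. a j * b i)" by (simp add: split_def)
        also have "\<dots> = (\<Sum>k<K+1. \<Sum>j\<le>k. a j * b (k - j))"
          using sum.triangle_reindex[of "\<lambda>j i. a j * b i" "K+1"] by (simp add: split_def)
        also have "\<dots> = (\<Sum>k<K+1. if k = 0 then 1 else 0)"
          unfolding a_def b_def conv ..
        also have "\<dots> = 1" by simp
        finally show ?thesis .
      qed
      have "cmod (1 - q z * r z) = cmod (\<Sum>j\<le>d. \<Sum>i\<le>K. (if i + j \<le> K then 0 else a j * b i))"
        unfolding split main by (simp add: norm_minus_commute)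
      also have "\<dots> \<le> (\<Sum>j\<le>d. \<Sum>i\<le>K. cmod (if i + j \<le> K then 0 else a j * b i))"
        by (intro order_trans[OF norm_sum] sum_mono norm_sum)
      also have "\<dots> \<le> (\<Sum>j\<le>d. \<Sum>i\<le>K. Cq * (B0 * R ^ d / R ^ K))"
      proof (intro sum_mono)
        fix j i assume j: "j \<in> {..d}" and i: "i \<in> {..K}"
        show "cmod (if i + j \<le> K then 0 else a j * b i) \<le> Cq * (B0 * R ^ d / R ^ K)"
        proof (cases "i + j \<le> K")
          case True then show ?thesis using Cq0 B00 R1 by simp
        next
          case False
          have ha: "cmod (a j) \<le> Cq" using j z qh_bound by (simp add: a_def Qf_nth)
          have hb: "cmod (b i) \<le> B0 / R ^ i" unfolding b_def by (rule fc_bound[OF z])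
          have "B0 / R ^ i \<le> B0 * R ^ d / R ^ K"
          proof -
            have "K \<le> i + d" using False j by auto
            then have "R ^ K \<le> R ^ (i + d)" using R1 by (intro power_increasing) auto
            then have "R ^ K \<le> R ^ i * R ^ d" by (simp add: power_add)
            then have "B0 * R ^ K \<le> B0 * (R ^ i * R ^ d)" using B00 by (rule mult_left_mono)
            then show ?thesis using R1 by (simp add: field_simps)
          qed
          then have "cmod (b i) \<le> B0 * R ^ d / R ^ K" using hb by linarith
          then have "cmod (a j * b i) \<le> Cq * (B0 * R ^ d / R ^ K)"
            unfolding norm_mult using ha Cq0 by (intro mult_mono) auto
          then show ?thesis using False by simp
        qed
      qed
      also have "\<dots> = real (d + 1) * (real K + 1) * (Cq * (B0 * R ^ d / R ^ K))" by simp
      also have "\<dots> = B * (real K + 1) / R ^ K" by (simp add: B_def)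
      finally show ?thesis .
    qed
    then show "\<exists>r. cpolyD K r \<and> (\<forall>z. norm z = 1 \<longrightarrow> cmod (1 - q z * r z) \<le> B * (real K + 1) / R ^ K)"
      using cpr by blast
  qed
  moreover have "B \<ge> 0" using Cq0 B00 R1 by (simp add: B_def)
  ultimately show ?thesis using dq R1 by blast
qed

lemma poly_geom_small:
  fixes C x :: real
  assumes "0 < x" "x < 1" "P > 0"
  shows "\<exists>K. C * (real K + 1) ^ P * x ^ K < 1"
proof -
  define y where "y = root P x"
  have y0: "y > 0" using assms by (simp add: y_def real_root_gt_zero)
  have y1: "y < 1" using assms by (simp add: y_def)
  have yP: "y ^ P = x" using assms by (simp add: y_def)
  have l1: "(\<lambda>K. of_nat K * y ^ K) \<longlonglongrightarrow> 0" by (rule powser_times_n_limit_0) (use y0 y1 in simp)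
  have l2: "(\<lambda>K. y ^ K) \<longlonglongrightarrow> 0" by (rule LIMSEQ_power_zero) (use y0 y1 in simp)
  have "(\<lambda>K. real K * y ^ K + y ^ K) \<longlonglongrightarrow> 0 + 0" by (intro tendsto_add l1 l2)
  then have "(\<lambda>K. (real K + 1) * y ^ K) \<longlonglongrightarrow> 0" by (simp add: algebra_simps)
  then have "(\<lambda>K. C * ((real K + 1) * y ^ K) ^ P) \<longlonglongrightarrow> C * 0 ^ P" by (intro tendsto_intros)
  moreover have "C * 0 ^ P = 0" using assms by (simp add: power_0_left)
  ultimately have "(\<lambda>K. C * ((real K + 1) * y ^ K) ^ P) \<longlonglongrightarrow> 0" by simp
  then have "eventually (\<lambda>K. C * ((real K + 1) * y ^ K) ^ P < 1) sequentially"
    by (rule order_tendstoD) simp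
  then obtain K where "C * ((real K + 1) * y ^ K) ^ P < 1" by (auto dest: eventually_happens)
  moreover have "((real K + 1) * y ^ K) ^ P = (real K + 1) ^ P * x ^ K"
    by (simp add: power_mult_distrib yP[symmetric] power_mult[symmetric] mult.commute)
  ultimately show ?thesis by (auto simp: mult.assoc)
qed

definition fam :: "nat \<Rightarrow> (nat \<Rightarrow> complex^'n::finite \<Rightarrow> complex) \<Rightarrow> (complex^'n \<Rightarrow> real) \<Rightarrow> bool" where
  "fam N h S \<longleftrightarrow> (\<forall>i<N. cpoly (h i)) \<and> (\<forall>z. (\<Sum>i<N. (cmod (h i z))\<^sup>2) = S z)"

lemma fam_single: "cpoly f \<Longrightarrow> fam 1 (\<lambda>_. f) (\<lambda>z. (cmod (f z))\<^sup>2)"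
  by (simp add: fam_def)

lemma fam_scale: "fam N h S \<Longrightarrow> fam N (\<lambda>i z. complex_of_real c * h i z) (\<lambda>z. c\<^sup>2 * S z)"
  unfolding fam_def
proof (intro conjI allI impI)
  assume a: "(\<forall>i<N. cpoly (h i)) \<and> (\<forall>z. (\<Sum>i<N. (cmod (h i z))\<^sup>2) = S z)"
  fix i assume "i < N"
  obtain D where "cpolyD D (h i)" using cpoly_cpolyD a \<open>i < N\<close> by blast
  then show "cpoly (\<lambda>z. complex_of_real c * h i z)" by (intro cpolyD_cpoly[OF cpolyD_cmult])
next
  fix z
  assume a: "(\<forall>i<N. cpoly (h i)) \<and> (\<forall>z. (\<Sum>i<N. (cmod (h i z))\<^sup>2) = S z)"
  have "(\<Sum>i<N. (cmod (complex_of_real c * h i z))\<^sup>2) = c\<^sup>2 * (\<Sum>i<N. (cmod (h i z))\<^sup>2)"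
    by (simp add: norm_mult power_mult_distrib sum_distrib_left)
  then show "(\<Sum>i<N. (cmod (complex_of_real c * h i z))\<^sup>2) = c\<^sup>2 * S z" using a by simp
qed

lemma fam_append:
  assumes "fam N1 h1 S1" "fam N2 h2 S2"
  shows "fam (N1 + N2) (\<lambda>i. if i < N1 then h1 i else h2 (i - N1)) (\<lambda>z. S1 z + S2 z)"
  unfolding fam_def
proof (intro conjI allI impI)
  fix i assume "i < N1 + N2"
  then show "cpoly (if i < N1 then h1 i else h2 (i - N1))" using assms by (auto simp: fam_def)
next
  fix z
  let ?h = "\<lambda>i. if i < N1 then h1 i else h2 (i - N1)"
  have "(\<Sum>i<N1 + N2. (cmod (?h i z))\<^sup>2) = (\<Sum>i\<in>{0..<N1 + N2}. (cmod (?h i z))\<^sup>2)"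
    by (simp only: atLeast0LessThan)
  also have "\<dots> = (\<Sum>i\<in>{0..<N1}. (cmod (?h i z))\<^sup>2) + (\<Sum>i\<in>{N1..<N1 + N2}. (cmod (?h i z))\<^sup>2)"
    by (rule sum.atLeastLessThan_concat[symmetric]) auto
  also have "(\<Sum>i\<in>{0..<N1}. (cmod (?h i z))\<^sup>2) = (\<Sum>i<N1. (cmod (h1 i z))\<^sup>2)"
    by (simp add: atLeast0LessThan)
  also have "(\<Sum>i\<in>{N1..<N1 + N2}. (cmod (?h i z))\<^sup>2) = (\<Sum>i\<in>{0..<N2}. (cmod (?h (i + N1) z))\<^sup>2)"
    using sum.shift_bounds_nat_ivl[of "\<lambda>i. (cmod (?h i z))\<^sup>2" 0 N1 N2] by (simp add: add.commute)
  also have "\<dots> = (\<Sum>i<N2. (cmod (h2 i z))\<^sup>2)" by (simp add: atLeast0LessThan)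
  finally show "(\<Sum>i<N1 + N2. (cmod (?h i z))\<^sup>2) = S1 z + S2 z" using assms by (simp add: fam_def)
qed

lemma fam_set:
  fixes F :: "'a \<Rightarrow> complex^'n::finite \<Rightarrow> complex"
  assumes "finite I" "\<forall>x\<in>I. cpoly (F x)"
  shows "\<exists>N h. fam N h (\<lambda>z. \<Sum>x\<in>I. (cmod (F x z))\<^sup>2)"
proof -
  obtain e where e: "bij_betw e {0..<card I} I" using ex_bij_betw_nat_finite[OF assms(1)] by blast
  have "fam (card I) (\<lambda>i. F (e i)) (\<lambda>z. \<Sum>x\<in>I. (cmod (F x z))\<^sup>2)"
    unfolding fam_def
  proof (intro conjI allI impI)
    fix i assume "i < card I"
    then have "e i \<in> I" using e by (auto simp: bij_betw_def)
    then show "cpoly (F (e i))" using assms by auto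
  next
    fix z show "(\<Sum>i<card I. (cmod (F (e i) z))\<^sup>2) = (\<Sum>x\<in>I. (cmod (F x z))\<^sup>2)"
      using sum.reindex_bij_betw[OF e, of "\<lambda>x. (cmod (F x z))\<^sup>2"] by (simp add: atLeast0LessThan)
  qed
  then show ?thesis by blast
qed

lemma id3:
  assumes "\<rho> > 0"
  shows "(cmod (1 - w))\<^sup>2 = (cmod (complex_of_real (sqrt \<rho>) - w / complex_of_real (sqrt \<rho>)))\<^sup>2 + (1 - \<rho>) * (1 - (cmod w)\<^sup>2 / \<rho>)"
proof -
  define s where "s = sqrt \<rho>"
  have s0: "s > 0" using assms by (simp add: s_def)
  have s2: "s\<^sup>2 = \<rho>" using assms by (simp add: s_def)
  have e1: "(cmod (complex_of_real s - w / complex_of_real s))\<^sup>2 = (s - Re w / s)\<^sup>2 + (Im w / s)\<^sup>2"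
    unfolding cmod_power2 by (simp add: Re_divide_of_real Im_divide_of_real power2_eq_square)
  have e2: "(cmod (1 - w))\<^sup>2 = (1 - Re w)\<^sup>2 + (Im w)\<^sup>2" by (simp add: cmod_power2)
  have e3: "(cmod w)\<^sup>2 = (Re w)\<^sup>2 + (Im w)\<^sup>2" by (simp add: cmod_power2)
  show ?thesis unfolding s_def[symmetric] unfolding e1 e2 e3 unfolding s2[symmetric] using s0
    by (simp add: field_simps power2_eq_square)
qed

lemma sq_sum_prod: "(\<Sum>p\<in>A \<times> B. (cmod (F (fst p) (snd p)))\<^sup>2) = (\<Sum>a\<in>A. \<Sum>b\<in>B. (cmod (F a b))\<^sup>2)"
  by (simp add: sum.cartesian_product split_def)

theorem theorem6p1:
  fixes q :: "complex^'n \<Rightarrow> complex"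
  assumes "cpoly q"
    and "\<forall>z\<in>cball 0 1. q z \<noteq> 0"
  shows "\<exists>(N::nat) (p :: nat \<Rightarrow> complex^'n \<Rightarrow> complex).
           (\<forall>i<N. cpoly (p i))
         \<and> (\<forall>i<N. holomorphic_Cn (\<lambda>z. p i z / q z) (ball 0 1))
         \<and> (\<forall>z\<in>ball 0 1. (\<lambda>i. if i < N then p i z / q z else 0) \<in> ballN N)
         \<and> proper_ball_map N (\<lambda>z i. if i < N then p i z / q z else 0)
         \<and> (\<forall>d. cpoly d \<and> cpoly_nonconstant d \<and> cpoly_dvd d q \<and> (\<forall>i<N. cpoly_dvd d (p i))
                \<longrightarrow> False)"
proof -
  note qp = assms(1) and qnz = assms(2)
  obtain d B R where dq: "cpolyD d q" and R1: "R > 1" and B0: "B \<ge> 0"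
    and approx: "\<forall>K. \<exists>r. cpolyD K r \<and> (\<forall>z. norm z = 1 \<longrightarrow> cmod (1 - q z * r z) \<le> B * (real K + 1) / R ^ K)"
    using exists_inverse_approx[OF qp qnz] by blast
  define n where "n = CARD('n)"
  define C where "C = B\<^sup>2 * exp 1 ^ n * (real d + 1) ^ (2*n+1)"
  obtain K where K: "C * (real K + 1) ^ (2*n+3) * (1 / R\<^sup>2) ^ K < 1"
    using poly_geom_small[of "1 / R\<^sup>2" "2*n+3" C] R1 by (auto simp: power_less_one_iff)
  obtain r where rK: "cpolyD K r" and rb: "\<forall>z. norm z = 1 \<longrightarrow> cmod (1 - q z * r z) \<le> B * (real K + 1) / R ^ K"
    using approx by blast
  define \<epsilon> where "\<epsilon> = B * (real K + 1) / R ^ K"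
  have \<epsilon>0: "\<epsilon> \<ge> 0" using B0 R1 by (simp add: \<epsilon>_def)
  define D where "D = d + K"
  define g where "g z = 1 - q z * r z" for z
  have gD: "cpolyD D g" unfolding g_def[abs_def] D_def
    by (intro cpolyD_diff cpolyD_const cpolyD_mult dq rK)
  then obtain c where gc: "\<forall>z. g z = (\<Sum>\<alpha>\<in>Adeg D. c \<alpha> * mnm \<alpha> z)" by (auto simp: cpolyD_def)
  obtain b where rbc: "\<forall>z. r z = (\<Sum>\<alpha>\<in>Adeg K. b \<alpha> * mnm \<alpha> z)" using rK by (auto simp: cpolyD_def)
  define A where "A = Acoef D c"
  define Ar where "Ar = Acoef K b"
  have A0: "A \<ge> 0" and Ar0: "Ar \<ge> 0" by (simp_all add: A_def Ar_def Acoef_nonneg)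
  have Ab: "A \<le> \<epsilon>\<^sup>2 * exp 1 ^ n * (real D + 1) ^ (2 * n)"
    unfolding A_def n_def by (rule Acoef_bound[OF gc]) (use rb in \<open>simp add: g_def \<epsilon>_def\<close>)
  define G where "G = A * (real D + 1)"
  have G0: "G \<ge> 0" using A0 by (simp add: G_def)
  have G1: "G < 1"
  proof -
    have "G \<le> \<epsilon>\<^sup>2 * exp 1 ^ n * (real D + 1) ^ (2 * n) * (real D + 1)"
      unfolding G_def by (rule mult_right_mono[OF Ab]) simp
    also have "\<dots> = \<epsilon>\<^sup>2 * exp 1 ^ n * (real D + 1) ^ (2 * n + 1)" by simp
    also have "\<dots> \<le> \<epsilon>\<^sup>2 * exp 1 ^ n * (((real d + 1) * (real K + 1)) ^ (2 * n + 1))"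
    proof (intro mult_left_mono power_mono)
      show "real D + 1 \<le> (real d + 1) * (real K + 1)" by (simp add: D_def algebra_simps)
    qed auto
    also have "\<dots> = C * (real K + 1) ^ (2*n+3) * (1 / R\<^sup>2) ^ K"
    proof -
      have e2: "\<epsilon>\<^sup>2 = B\<^sup>2 * (real K + 1)\<^sup>2 * (1 / R\<^sup>2) ^ K"
        by (simp add: \<epsilon>_def power_divide power_mult_distrib power_mult[symmetric] mult.commute power_one_over)
      have k3: "(real K + 1) ^ (2*n+3) = (real K + 1)\<^sup>2 * (real K + 1) ^ (2*n+1)"
      proof -
        have "2*n+3 = 2 + (2*n+1)" by simp
        then show ?thesis by (simp only: power_add)
      qed
      show ?thesis unfolding e2 C_def k3 power_mult_distrib
        by (simp only: mult_ac)
    qed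
    also have "\<dots> < 1" by (rule K)
    finally show ?thesis .
  qed
  define L where "L = Ar * (real K + 1) + 1"
  have L0: "L > 0"
  proof -
    have "Ar * (real K + 1) \<ge> 0" using Ar0 by simp
    then show ?thesis by (simp add: L_def)
  qed
  define \<rho> where "\<rho> = (1 + G) / 2"
  have \<rho>0: "\<rho> > 0" "\<rho> < 1" "G < \<rho>" using G0 G1 by (auto simp: \<rho>_def)
  define \<kappa> where "\<kappa> = (1 - \<rho>) * (1 - G / \<rho>)"
  have \<kappa>0: "\<kappa> > 0"
  proof -
    have "G / \<rho> < 1" using \<rho>0 by (simp add: divide_less_eq)
    then show ?thesis unfolding \<kappa>_def using \<rho>0 by (intro mult_pos_pos) auto
  qed
  define sq where "sq = (\<lambda>t::real. complex_of_real (sqrt t))"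
  define f1 where "f1 = (\<lambda>z::complex^'n. sq (\<kappa> / (2 * L)))"
  define f2 where "f2 = (\<lambda>z. sq (1 / (2 * L)) * (sq \<rho> - g z / sq \<rho>))"
  define F3 where "F3 = (\<lambda>p z. sq ((1 - \<rho>) / (4 * \<rho> * L)) * ucert c (fst p) (snd p) z)"
  define f4 where "f4 = (\<lambda>z. sq (1 / (2 * L)) * q z)"
  define F5 where "F5 = (\<lambda>p z. sq (1 / (4 * L)) * (q z * ucert b (fst p) (snd p) z))"
  define F6 where "F6 = (\<lambda>i z. sq (1 / 2) * (q z * z $ i))"
  have cp1: "cpoly f1" unfolding f1_def by (rule cpolyD_cpoly[OF cpolyD_const])
  have cp2: "cpoly f2"
  proof -
    have "cpolyD D (\<lambda>z. inverse (sq \<rho>) * g z)" by (rule cpolyD_cmult[OF gD])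
    then have "cpolyD D (\<lambda>z. g z / sq \<rho>)" by (simp add: divide_inverse mult.commute)
    then have "cpolyD D f2" unfolding f2_def by (intro cpolyD_cmult cpolyD_diff cpolyD_const)
    then show ?thesis by (rule cpolyD_cpoly)
  qed
  have cp3: "\<forall>p\<in>Adeg D \<times> Adeg D. cpoly (F3 p)" unfolding F3_def
    by (auto intro!: cpolyD_cpoly cpolyD_cmult cpolyD_ucert)
  have cp4: "cpoly f4" unfolding f4_def by (rule cpolyD_cpoly, rule cpolyD_cmult, rule dq)
  have cp5: "\<forall>p\<in>Adeg K \<times> Adeg K. cpoly (F5 p)" unfolding F5_def
    by (auto intro!: cpolyD_cpoly cpolyD_cmult cpolyD_mult dq cpolyD_ucert)
  have cp6: "\<forall>i\<in>UNIV. cpoly (F6 i)" unfolding F6_def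
    by (auto intro!: cpolyD_cpoly cpolyD_cmult cpolyD_mult dq cpolyD_coord)
  obtain N3 h3 where h3: "fam N3 h3 (\<lambda>z. \<Sum>p\<in>Adeg D \<times> Adeg D. (cmod (F3 p z))\<^sup>2)"
    using fam_set[OF _ cp3] by auto
  obtain N5 h5 where h5: "fam N5 h5 (\<lambda>z. \<Sum>p\<in>Adeg K \<times> Adeg K. (cmod (F5 p z))\<^sup>2)"
    using fam_set[OF _ cp5] by auto
  obtain N6 h6 where h6: "fam N6 h6 (\<lambda>z. \<Sum>i\<in>UNIV. (cmod (F6 i z))\<^sup>2)"
    using fam_set[OF _ cp6] by auto
  define S where "S z = (cmod (f1 z))\<^sup>2 + ((cmod (f2 z))\<^sup>2 + ((\<Sum>p\<in>Adeg D \<times> Adeg D. (cmod (F3 p z))\<^sup>2)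
       + ((cmod (f4 z))\<^sup>2 + ((\<Sum>p\<in>Adeg K \<times> Adeg K. (cmod (F5 p z))\<^sup>2) + (\<Sum>i\<in>UNIV. (cmod (F6 i z))\<^sup>2)))))" for z
  obtain N h where hf: "fam N h S" and h0: "h 0 = f1" and N0: "0 < N"
  proof -
    note fam_append[OF fam_single[OF cp1] fam_append[OF fam_single[OF cp2] fam_append[OF h3 fam_append[OF fam_single[OF cp4] fam_append[OF h5 h6]]]]]
    note F' = this[folded S_def]
    show ?thesis by (rule that[OF F']) simp_all
  qed
  have key: "S z = (1/2) * (cmod (q z))\<^sup>2 * (norm z)\<^sup>2 + (1/2) * (cmod (q z))\<^sup>2
      - ((1 - \<rho>) / \<rho> * A * ((real D + 1) - Phi D z) + (cmod (q z))\<^sup>2 * Ar * ((real K + 1) - Phi K z)) / (2 * L)" for z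
  proof -
    define Q where "Q = (cmod (q z))\<^sup>2"
    define Rr where "Rr = (cmod (r z))\<^sup>2"
    define Gg where "Gg = (cmod (g z))\<^sup>2"
    define U where "U = (1/2) * (\<Sum>\<alpha>\<in>Adeg D. \<Sum>\<beta>\<in>Adeg D. (cmod (ucert c \<alpha> \<beta> z))\<^sup>2)"
    define V where "V = (1/2) * (\<Sum>\<alpha>\<in>Adeg K. \<Sum>\<beta>\<in>Adeg K. (cmod (ucert b \<alpha> \<beta> z))\<^sup>2)"
    define W where "W = (cmod (sq \<rho> - g z / sq \<rho>))\<^sup>2"
    have I1: "Rr + V = Ar * Phi K z" unfolding Rr_def V_def Ar_def by (rule certificate[OF rbc])
    have I2: "Gg + U = A * Phi D z" unfolding Gg_def U_def A_def by (rule certificate[OF gc])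
    have I3: "Q * Rr = W + (1 - \<rho>) * (1 - Gg / \<rho>)"
    proof -
      have "Q * Rr = (cmod (q z * r z))\<^sup>2" by (simp add: Q_def Rr_def norm_mult power_mult_distrib)
      also have "q z * r z = 1 - g z" by (simp add: g_def)
      also have "(cmod (1 - g z))\<^sup>2 = W + (1 - \<rho>) * (1 - Gg / \<rho>)"
        unfolding W_def Gg_def sq_def by (rule id3[OF \<rho>0(1)])
      finally show ?thesis .
    qed
    have sq2: "(cmod (sq t))\<^sup>2 = t" if "t \<ge> 0" for t using that by (simp add: sq_def)
    have L2: "1 / (2 * L) \<ge> 0" "1 / (4 * L) \<ge> 0" "(1 - \<rho>) / (4 * \<rho> * L) \<ge> 0" "\<kappa> / (2 * L) \<ge> 0"
      using L0 \<rho>0 \<kappa>0 by auto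
    have s1: "(cmod (f1 z))\<^sup>2 = \<kappa> / (2 * L)" unfolding f1_def using L2 by (simp add: sq2)
    have s2: "(cmod (f2 z))\<^sup>2 = W / (2 * L)" unfolding f2_def W_def norm_mult power_mult_distrib
      using L2 by (simp add: sq2)
    have s3: "(\<Sum>p\<in>Adeg D \<times> Adeg D. (cmod (F3 p z))\<^sup>2) = (1 - \<rho>) / (4 * \<rho> * L) * (2 * U)"
      unfolding F3_def U_def
        norm_mult power_mult_distrib using L2 by (simp add: sq2 sum_distrib_left sum.cartesian_product split_def)
    have s4: "(cmod (f4 z))\<^sup>2 = Q / (2 * L)" unfolding f4_def Q_def norm_mult power_mult_distrib
      using L2 by (simp add: sq2)
    have s5: "(\<Sum>p\<in>Adeg K \<times> Adeg K. (cmod (F5 p z))\<^sup>2) = 1 / (4 * L) * Q * (2 * V)"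
      unfolding F5_def V_def Q_def
        norm_mult power_mult_distrib using L2 by (simp add: sq2 sum_distrib_left mult.assoc sum.cartesian_product split_def)
    have s6: "(\<Sum>i\<in>UNIV. (cmod (F6 i z))\<^sup>2) = (1/2) * Q * (norm z)\<^sup>2"
      unfolding F6_def Q_def norm_mult power_mult_distrib norm_sq_vec by (simp add: sq2 sum_distrib_left)
    have "S z = \<kappa> / (2 * L) + W / (2 * L) + (1 - \<rho>) / (4 * \<rho> * L) * (2 * U) + Q / (2 * L)
              + 1 / (4 * L) * Q * (2 * V) + (1/2) * Q * (norm z)\<^sup>2"
      unfolding S_def s1 s2 s3 s4 s5 s6 by simp
    also have "\<dots> = (1/2) * Q * (norm z)\<^sup>2 + (1/2) * Q
      - ((1 - \<rho>) / \<rho> * A * ((real D + 1) - Phi D z) + Q * Ar * ((real K + 1) - Phi K z)) / (2 * L)"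
    proof -
      have U': "U = A * Phi D z - Gg" using I2 by simp
      have V': "V = Ar * Phi K z - Rr" using I1 by simp
      have W': "W = Q * Rr - (1 - \<rho>) * (1 - Gg / \<rho>)" using I3 by simp
      have k': "\<kappa> = (1 - \<rho>) * (1 - A * (real D + 1) / \<rho>)" by (simp add: \<kappa>_def G_def)
      define \<Delta> where "\<Delta> = (1 - \<rho>) / \<rho> * A * ((real D + 1) - Phi D z) + Q * Ar * ((real K + 1) - Phi K z)"
      have E: "\<kappa> + W + (1 - \<rho>) / \<rho> * U + Q + Q * V = L * Q - \<Delta>"
        unfolding U' V' W' k' L_def \<Delta>_def using \<rho>0 by (simp add: field_simps)
      have "\<kappa> / (2 * L) + W / (2 * L) + (1 - \<rho>) / (4 * \<rho> * L) * (2 * U) + Q / (2 * L)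
              + 1 / (4 * L) * Q * (2 * V) + (1/2) * Q * (norm z)\<^sup>2
          = (\<kappa> + W + (1 - \<rho>) / \<rho> * U + Q + Q * V) / (2 * L) + (1/2) * Q * (norm z)\<^sup>2"
        using L0 \<rho>0 by (simp add: field_simps)
      also have "\<dots> = (L * Q - \<Delta>) / (2 * L) + (1/2) * Q * (norm z)\<^sup>2" unfolding E ..
      also have "\<dots> = (1/2) * Q * (norm z)\<^sup>2 + (1/2) * Q - \<Delta> / (2 * L)"
        using L0 by (simp add: field_simps)
      finally show ?thesis by (simp only: \<Delta>_def)
    qed
    finally show ?thesis by (simp add: Q_def)
  qed
  have Delta_nonneg: "(1 - \<rho>) / \<rho> * A * ((real D + 1) - Phi D z) + (cmod (q z))\<^sup>2 * Ar * ((real K + 1) - Phi K z) \<ge> 0"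
    if "norm z \<le> 1" for z
    using Phi_le[OF that, of D] Phi_le[OF that, of K] \<rho>0 A0 Ar0
    by (intro add_nonneg_nonneg mult_nonneg_nonneg) auto
  show ?thesis
  proof (rule main_reduction[OF qp qnz])
    show "\<forall>i<N. cpoly (h i)" using hf by (simp add: fam_def)
    show "0 < N" by (rule N0)
    show "\<forall>z. h 0 z = sq (\<kappa> / (2 * L))" using h0 by (simp add: f1_def)
    show "sq (\<kappa> / (2 * L)) \<noteq> 0" using \<kappa>0 L0 by (simp add: sq_def)
    show "\<forall>z. norm z < 1 \<longrightarrow> (\<Sum>i<N. (cmod (h i z))\<^sup>2) < (cmod (q z))\<^sup>2"
    proof (intro allI impI)
      fix z :: "complex^'n" assume z: "norm z < 1"
      have "q z \<noteq> 0" using qnz z by auto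
      then have Qp: "(cmod (q z))\<^sup>2 > 0" by simp
      have "(\<Sum>i<N. (cmod (h i z))\<^sup>2) = S z" using hf by (simp add: fam_def)
      also have "\<dots> \<le> (1/2) * (cmod (q z))\<^sup>2 * (norm z)\<^sup>2 + (1/2) * (cmod (q z))\<^sup>2"
      proof -
        have "0 \<le> ((1 - \<rho>) / \<rho> * A * ((real D + 1) - Phi D z) + (cmod (q z))\<^sup>2 * Ar * ((real K + 1) - Phi K z)) / (2 * L)"
          using Delta_nonneg[of z] z L0 by (intro divide_nonneg_pos) auto
        then show ?thesis unfolding key by linarith
      qed
      also have "\<dots> < (1/2) * (cmod (q z))\<^sup>2 * 1 + (1/2) * (cmod (q z))\<^sup>2"
        using Qp z by (intro add_strict_right_mono mult_strict_left_mono) (auto simp: power_less_one_iff)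
      finally show "(\<Sum>i<N. (cmod (h i z))\<^sup>2) < (cmod (q z))\<^sup>2" by simp
    qed
    show "\<forall>z. norm z = 1 \<longrightarrow> (\<Sum>i<N. (cmod (h i z))\<^sup>2) = (cmod (q z))\<^sup>2"
    proof (intro allI impI)
      fix z :: "complex^'n" assume z: "norm z = 1"
      have "(\<Sum>i<N. (cmod (h i z))\<^sup>2) = S z" using hf by (simp add: fam_def)
      also have "\<dots> = (cmod (q z))\<^sup>2" unfolding key using z by (simp add: Phi_eq)
      finally show "(\<Sum>i<N. (cmod (h i z))\<^sup>2) = (cmod (q z))\<^sup>2" .
    qed
  qed
qed

end
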